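(* Let $\mathcal{R}$ be a left-linear TRS, $M$ the set automaton constructed from $\mathcal{R}$, $t_0$ a ground term and $\mathit{select}$ a strategy. If $\textsc{Normalize}(t_0,\mathit{select})$ returns a term $t$, then $t$ is a normal form of $t_0$, i.e. $t_0\to^* t$ and $t$ has no redexes.
   Context: Terms: $\mathbb{F}$ finite ranked alphabet with arity $\#$, $\mathbb{V}$ variables. Positions are finite lists of positive integers; $\epsilon$ empty, $p.q$ concatenation. $\mathcal{D}(t)$ positions of $t$, $\mathcal{E}(t)$ variable positions, $t|_p$ subterm, $t[u]_p$ replacement, $\mathrm{hd}(t)$ head symbol. A TRS $\mathcal{R}$ is a finite nonempty set of rules $\ell\to r$ ($\ell\notin\mathbb{V}$, $\mathrm{vars}(r)\subseteq\mathrm{vars}(\ell)$), with left-hand sides $\mathcal{L}$; left-linear means no variable occurs twice in any left-hand side. A redex of $t$ is $(\ell\to r)@p$ with $\ell\to r\in\mathcal{R}$ and $t|_p=\ell^\sigma$ for some $\sigma$; $t[(\ell\to r)@p]$ denotes $t[r^\sigma]_p$; $\to$ is one-step rewriting, $\to^*$ its reflexive-transitive closure; a normal form has no redexes. Set automaton construction. $\mathrm{sub}(\mathcal{L})$: subterms $\ell|_q$, $\ell\in\mathcal{L}$, $q\in\mathcal{D}(\ell)\setminus\mathcal{E}(\ell)$. A match goal $\ell_1@p_1,\dots,\ell_n@p_n\hookrightarrow\ell@p$ ($n\ge1$) has nonempty obligation $mo=\{\ell_i@p_i\}$ ($\ell_i\in\mathrm{sub}(\mathcal{L})$) and announcement $\ell@p$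 ($\ell\in\mathcal{L}$); $\mathrm{pos}(mo)=\{p_i\}$. States are nonempty sets of goals; $s_0=\{\ell@\epsilon\hookrightarrow\ell@\epsilon\mid\ell\in\mathcal{L}\}$; $S$ = states reachable from $s_0$. Each state $s$ has a fixed label $L(s)\in\mathrm{pos}(mo)$ for some goal $mo\hookrightarrow\ell@\epsilon\in s$. $\mathrm{reduce}(mo,f,p)=\{\ell'@q\in mo\mid q\ne p\}\cup\{\ell'|_i@p.i\mid\ell'@p\in mo,1\le i\le\#f,\ell'|_i\notin\mathbb{V}\}$. $\mathrm{deriv}(s,f)$ is the union of $\{\mathrm{reduce}(mo,f,L(s))\hookrightarrow ma\mid mo\hookrightarrow ma\in s,\exists\ell'.\ell'@L(s)\in mo\wedge\mathrm{hd}(\ell')=f,\mathrm{reduce}(mo,f,L(s))\ne\emptyset\}$, $\{mo\hookrightarrow ma\in s\mid L(s)\notin\mathrm{pos}(mo)\}$ and $\{\ell@L(s).i\hookrightarrow\ell@L(s).i\mid\ell\in\mathcal{L},1\le i\le\#f\}$. Goals are directly dependent if their obligation positions intersect; dependency is its transitive closure. For a dependency class $K$ of $\mathrm{deriv}(s,f)$, $\mathrm{gcp}(K)$ is the greatest common prefix of its announcement positions and $\mathrm{lift}(K)$ removes that prefix from all positions in $K$. $\delta(s,f)=\{(\mathrm{lift}(K),\mathrm{gcp}(K))\mid K\}$; $\mathit{out}(s,f)=\{(\ell\to r)@p\mid\ell\to r\in\mathcal{R},f(x_1,\dots,x_{\#f})@L(s)\hookrightarrow\ell@p\in s,x_i\in\mathbb{V}\}$.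 Configuration trees: $ct::=\mathit{bud}(s,p)\mid\mathit{node}(s,p,cts)$, $cts$ a finite possibly empty set of configuration trees; $\mathit{buds}(ct)$, $\mathit{nodes}(ct)$ are the configurations labelling bud/node vertices. $\mathit{grow}(ct,s,p,t)$ replaces every $\mathit{bud}(s,p)$ in $ct$ by $\mathit{node}(s,p,\{\mathit{bud}(s',p.p')\mid(s',p')\in\delta(s,\mathrm{hd}(t|_{p.L(s)}))\})$. $\mathit{prune}(\mathit{bud}(s,p),q)=\mathit{bud}(s,p)$; $\mathit{prune}(\mathit{node}(s,p,cts),q)=\mathit{bud}(s,p)$ if $p.L(s)=q$, else $\mathit{node}(s,p,\{\mathit{prune}(c,q)\mid c\in cts\})$. $ct[p]$ is the subtree of $ct$ whose root configuration $(s,q)$ has $q.L(s)=p$. $\mathit{matches}(s,p,t)=\{(\ell\to r)@p.q\mid(\ell\to r)@q\in\mathit{out}(s,\mathrm{hd}(t|_{p.L(s)}))\}$. Strategy: a partial function $\mathit{select}$ mapping $(ct,reds)$ with $\mathit{buds}(ct)\cup reds\neq\emptyset$ to an element of $\mathit{buds}(ct)\cup reds$. Procedure $\textsc{Normalize}(t_0,\mathit{select})$: set $t:=t_0$, $reds:=\emptyset$, $ct:=\mathit{bud}(s_0,\epsilon)$. While $\mathit{buds}(ct)\ne\emptyset$ or $reds\ne\emptyset$: let $a=\mathit{select}(ct,reds)$. If $a$ is a configuration $(s,p)$: $ct:=\mathit{grow}(ct,s,p,t)$, then $reds:=reds\cup\mathit{matches}(s,p,t)$. If $a$ is a redex $(\ell\to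 r)@p\in reds$: $reds:=reds\setminus\bigcup\{\mathit{matches}(s,q,t)\mid(s,q)\in\mathit{nodes}(ct[p])\}$, then $ct:=\mathit{prune}(ct,p)$, then $t:=t[(\ell\to r)@p]$. After the loop, return $t$. *)

theory Defs
  imports Main "HOL-Library.FSet" "HOL-Library.Sublist"
begin

datatype ('f,'v) "term" = Var 'v | Fun 'f "('f,'v) term list"

type_synonym pos = "nat list"  (* positions: lists of positive integers, children numbered from 1 *)

fun in_poss :: "pos \<Rightarrow> ('f,'v) term \<Rightarrow> bool" where
  "in_poss [] t = True"
| "in_poss (i#p) (Var x) = False"
| "in_poss (i#p) (Fun f ts) = (1 \<le> i \<and> i \<le> length ts \<and> in_poss p (ts ! (i - 1)))"

fun subt :: "('f,'v) term \<Rightarrow> pos \<Rightarrow> ('f,'v) term" where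
  "subt t [] = t"
| "subt (Fun f ts) (i#p) = subt (ts ! (i - 1)) p"
| "subt (Var x) (i#p) = Var x"

fun replace_at :: "('f,'v) term \<Rightarrow> pos \<Rightarrow> ('f,'v) term \<Rightarrow> ('f,'v) term" where
  "replace_at t [] u = u"
| "replace_at (Fun f ts) (i#p) u = Fun f (ts[i - 1 := replace_at (ts ! (i - 1)) p u])"
| "replace_at (Var x) (i#p) u = Var x"

fun hd_sym :: "('f,'v) term \<Rightarrow> 'f" where
  "hd_sym (Fun f ts) = f"

fun vars :: "('f,'v) term \<Rightarrow> 'v set" where
  "vars (Var x) = {x}"
| "vars (Fun f ts) = (\<Union>t\<in>set ts. vars t)"

fun subst :: "('v \<Rightarrow> ('f,'v) term) \<Rightarrow> ('f,'v) term \<Rightarrow> ('f,'v) term" where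
  "subst \<sigma> (Var x) = \<sigma> x"
| "subst \<sigma> (Fun f ts) = Fun f (map (subst \<sigma>) ts)"

fun wf_term :: "'f set \<Rightarrow> ('f \<Rightarrow> nat) \<Rightarrow> ('f,'v) term \<Rightarrow> bool" where
  "wf_term F ar (Var x) = True"
| "wf_term F ar (Fun f ts) = (f \<in> F \<and> length ts = ar f \<and> (\<forall>t\<in>set ts. wf_term F ar t))"

definition ground :: "('f,'v) term \<Rightarrow> bool" where
  "ground t \<longleftrightarrow> vars t = {}"

definition linear :: "('f,'v) term \<Rightarrow> bool" where
  "linear t \<longleftrightarrow> (\<forall>p q x. in_poss p t \<and> in_poss q t \<and> subt t p = Var x \<and> subt t q = Var x \<longrightarrow> p = q)"

type_synonym ('f,'v) rule = "('f,'v) term \<times> ('f,'v) term"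

definition trs :: "'f set \<Rightarrow> ('f \<Rightarrow> nat) \<Rightarrow> ('f,'v) rule set \<Rightarrow> bool" where
  "trs F ar R \<longleftrightarrow> finite R \<and> R \<noteq> {} \<and>
     (\<forall>(l,r)\<in>R. (\<forall>x. l \<noteq> Var x) \<and> vars r \<subseteq> vars l \<and> wf_term F ar l \<and> wf_term F ar r)"

definition left_linear :: "('f,'v) rule set \<Rightarrow> bool" where
  "left_linear R \<longleftrightarrow> (\<forall>(l,r)\<in>R. linear l)"

definition rstep :: "('f,'v) rule set \<Rightarrow> (('f,'v) term \<times> ('f,'v) term) set" where
  "rstep R = {(s,t). \<exists>l r p \<sigma>. (l,r) \<in> R \<and> in_poss p s \<and> subt s p = subst \<sigma> l
                        \<and> t = replace_at s p (subst \<sigma> r)}"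

definition NF :: "('f,'v) rule set \<Rightarrow> ('f,'v) term \<Rightarrow> bool" where
  "NF R t \<longleftrightarrow> \<not> (\<exists>l r p \<sigma>. (l,r) \<in> R \<and> in_poss p t \<and> subt t p = subst \<sigma> l)"

definition rewrite_at :: "('f,'v) term \<Rightarrow> ('f,'v) rule \<Rightarrow> pos \<Rightarrow> ('f,'v) term" where
  "rewrite_at t rl p = replace_at t p (subst (SOME \<sigma>. subt t p = subst \<sigma> (fst rl)) (snd rl))"

type_synonym ('f,'v) obl = "(('f,'v) term \<times> pos) set"
type_synonym ('f,'v) goal = "('f,'v) obl \<times> (('f,'v) term \<times> pos)"
type_synonym ('f,'v) state = "('f,'v) goal set"
type_synonym ('f,'v) redex = "('f,'v) rule \<times> pos"

definition lhss :: "('f,'v) rule set \<Rightarrow> ('f,'v) term set" where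
  "lhss R = fst ` R"

definition s0 :: "('f,'v) rule set \<Rightarrow> ('f,'v) state" where
  "s0 R = {({(l,[])}, (l,[])) | l. l \<in> lhss R}"

definition opos :: "('f,'v) obl \<Rightarrow> pos set" where
  "opos mo = snd ` mo"

definition reduce :: "('f \<Rightarrow> nat) \<Rightarrow> ('f,'v) obl \<Rightarrow> 'f \<Rightarrow> pos \<Rightarrow> ('f,'v) obl" where
  "reduce ar mo f p =
     {(l',q). (l',q) \<in> mo \<and> q \<noteq> p} \<union>
     {(subt l' [i], p @ [i]) | l' i. (l',p) \<in> mo \<and> 1 \<le> i \<and> i \<le> ar f \<and> in_poss [i] l'
                                   \<and> (\<forall>x. subt l' [i] \<noteq> Var x)}"

definition deriv :: "('f \<Rightarrow> nat) \<Rightarrow> ('f,'v) rule set \<Rightarrow> (('f,'v) state \<Rightarrow> pos)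
                     \<Rightarrow> ('f,'v) state \<Rightarrow> 'f \<Rightarrow> ('f,'v) state" where
  "deriv ar R L s f =
     {(reduce ar mo f (L s), ma) | mo ma. (mo,ma) \<in> s
        \<and> (\<exists>l' ts. (l', L s) \<in> mo \<and> l' = Fun f ts) \<and> reduce ar mo f (L s) \<noteq> {}}
   \<union> {(mo,ma). (mo,ma) \<in> s \<and> L s \<notin> opos mo}
   \<union> {({(l, L s @ [i])}, (l, L s @ [i])) | l i. l \<in> lhss R \<and> 1 \<le> i \<and> i \<le> ar f}"

definition dep_edge :: "('f,'v) state \<Rightarrow> (('f,'v) goal \<times> ('f,'v) goal) set" where
  "dep_edge D = {(g1,g2). g1 \<in> D \<and> g2 \<in> D \<and> opos (fst g1) \<inter> opos (fst g2) \<noteq> {}}"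

definition dep_classes :: "('f,'v) state \<Rightarrow> ('f,'v) state set" where
  "dep_classes D = {K. \<exists>g\<in>D. K = {g'. (g,g') \<in> (dep_edge D)\<^sup>*}}"

definition gcp :: "pos set \<Rightarrow> pos" where
  "gcp P = (SOME q. (\<forall>p\<in>P. prefix q p) \<and> (\<forall>q'. (\<forall>p\<in>P. prefix q' p) \<longrightarrow> prefix q' q))"

definition ann_pos :: "('f,'v) state \<Rightarrow> pos set" where
  "ann_pos K = (\<lambda>g. snd (snd g)) ` K"

definition lift :: "('f,'v) state \<Rightarrow> ('f,'v) state" where
  "lift K = (let n = length (gcp (ann_pos K)) in
     (\<lambda>(mo,(l,p)). ((\<lambda>(l',q). (l', drop n q)) ` mo, (l, drop n p))) ` K)"

definition delta :: "('f \<Rightarrow> nat) \<Rightarrow> ('f,'v) rule set \<Rightarrow> (('f,'v) state \<Rightarrow> pos)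
                     \<Rightarrow> ('f,'v) state \<Rightarrow> 'f \<Rightarrow> (('f,'v) state \<times> pos) set" where
  "delta ar R L s f = {(lift K, gcp (ann_pos K)) | K. K \<in> dep_classes (deriv ar R L s f)}"

definition out :: "('f \<Rightarrow> nat) \<Rightarrow> ('f,'v) rule set \<Rightarrow> (('f,'v) state \<Rightarrow> pos)
                   \<Rightarrow> ('f,'v) state \<Rightarrow> 'f \<Rightarrow> ('f,'v) redex set" where
  "out ar R L s f = {((l,r),p) | l r p. (l,r) \<in> R \<and>
     (\<exists>xs. length xs = ar f \<and> (\<forall>x\<in>set xs. \<exists>v. x = Var v) \<and> ({(Fun f xs, L s)}, (l,p)) \<in> s)}"

inductive_set reach :: "'f set \<Rightarrow> ('f \<Rightarrow> nat) \<Rightarrow> ('f,'v) rule set \<Rightarrow> (('f,'v) state \<Rightarrow> pos)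
                        \<Rightarrow> ('f,'v) state set"
  for F ar R L where
  init: "s0 R \<in> reach F ar R L"
| step: "s \<in> reach F ar R L \<Longrightarrow> f \<in> F \<Longrightarrow> (s',p') \<in> delta ar R L s f \<Longrightarrow> s' \<in> reach F ar R L"

definition valid_label :: "'f set \<Rightarrow> ('f \<Rightarrow> nat) \<Rightarrow> ('f,'v) rule set \<Rightarrow> (('f,'v) state \<Rightarrow> pos) \<Rightarrow> bool" where
  "valid_label F ar R L \<longleftrightarrow> (\<forall>s\<in>reach F ar R L. \<exists>mo l. (mo,(l,[])) \<in> s \<and> L s \<in> opos mo)"

datatype ('f,'v) ctree = Bud "('f,'v) state" pos | Node "('f,'v) state" pos "('f,'v) ctree fset"

primrec buds :: "('f,'v) ctree \<Rightarrow> (('f,'v) state \<times> pos) set" where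
  "buds (Bud s p) = {(s,p)}"
| "buds (Node s p cs) = \<Union>(fset (fimage buds cs))"

primrec nodes :: "('f,'v) ctree \<Rightarrow> (('f,'v) state \<times> pos) set" where
  "nodes (Bud s p) = {}"
| "nodes (Node s p cs) = insert (s,p) (\<Union>(fset (fimage nodes cs)))"

primrec subtrees :: "('f,'v) ctree \<Rightarrow> ('f,'v) ctree set" where
  "subtrees (Bud s p) = {Bud s p}"
| "subtrees (Node s p cs) = insert (Node s p cs) (\<Union>(fset (fimage subtrees cs)))"

fun root :: "('f,'v) ctree \<Rightarrow> ('f,'v) state \<times> pos" where
  "root (Bud s p) = (s,p)"
| "root (Node s p cs) = (s,p)"

primrec grow_rep :: "('f,'v) ctree fset \<Rightarrow> ('f,'v) state \<Rightarrow> pos \<Rightarrow> ('f,'v) ctree \<Rightarrow> ('f,'v) ctree" where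
  "grow_rep new s p (Bud s' p') = (if s' = s \<and> p' = p then Node s p new else Bud s' p')"
| "grow_rep new s p (Node s' p' cs) = Node s' p' (fimage (grow_rep new s p) cs)"

definition grow :: "('f \<Rightarrow> nat) \<Rightarrow> ('f,'v) rule set \<Rightarrow> (('f,'v) state \<Rightarrow> pos)
                    \<Rightarrow> ('f,'v) ctree \<Rightarrow> ('f,'v) state \<Rightarrow> pos \<Rightarrow> ('f,'v) term \<Rightarrow> ('f,'v) ctree" where
  "grow ar R L ct s p t =
     grow_rep (Abs_fset {Bud s' (p @ p') | s' p'. (s',p') \<in> delta ar R L s (hd_sym (subt t (p @ L s)))})
              s p ct"

primrec prune :: "(('f,'v) state \<Rightarrow> pos) \<Rightarrow> pos \<Rightarrow> ('f,'v) ctree \<Rightarrow> ('f,'v) ctree" where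
  "prune L q (Bud s p) = Bud s p"
| "prune L q (Node s p cs) = (if p @ L s = q then Bud s p else Node s p (fimage (prune L q) cs))"

definition nodes_at :: "(('f,'v) state \<Rightarrow> pos) \<Rightarrow> ('f,'v) ctree \<Rightarrow> pos \<Rightarrow> (('f,'v) state \<times> pos) set" where
  "nodes_at L ct p = \<Union>{nodes c | c. c \<in> subtrees ct \<and> snd (root c) @ L (fst (root c)) = p}"

definition matches :: "('f \<Rightarrow> nat) \<Rightarrow> ('f,'v) rule set \<Rightarrow> (('f,'v) state \<Rightarrow> pos)
                       \<Rightarrow> ('f,'v) state \<Rightarrow> pos \<Rightarrow> ('f,'v) term \<Rightarrow> ('f,'v) redex set" where
  "matches ar R L s p t = {(rl, p @ q) | rl q. (rl,q) \<in> out ar R L s (hd_sym (subt t (p @ L s)))}"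

type_synonym ('f,'v) selector =
  "('f,'v) ctree \<Rightarrow> ('f,'v) redex set \<Rightarrow> (('f,'v) state \<times> pos) + ('f,'v) redex"

definition strategy :: "('f,'v) selector \<Rightarrow> bool" where
  "strategy sel \<longleftrightarrow> (\<forall>ct reds. buds ct \<noteq> {} \<or> reds \<noteq> {} \<longrightarrow>
      (case sel ct reds of Inl c \<Rightarrow> c \<in> buds ct | Inr rd \<Rightarrow> rd \<in> reds))"

text \<open>norm_run ... t reds ct t': the while loop started in state (t, reds, ct) terminates returning t'.\<close>
inductive norm_run :: "('f \<Rightarrow> nat) \<Rightarrow> ('f,'v) rule set \<Rightarrow> (('f,'v) state \<Rightarrow> pos) \<Rightarrow> ('f,'v) selector
                       \<Rightarrow> ('f,'v) term \<Rightarrow> ('f,'v) redex set \<Rightarrow> ('f,'v) ctree \<Rightarrow> ('f,'v) term \<Rightarrow> bool"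
  for ar R L sel where
  stop: "buds ct = {} \<Longrightarrow> reds = {} \<Longrightarrow> norm_run ar R L sel t reds ct t"
| conf: "buds ct \<noteq> {} \<or> reds \<noteq> {} \<Longrightarrow> sel ct reds = Inl (s,p) \<Longrightarrow>
         norm_run ar R L sel t (reds \<union> matches ar R L s p t) (grow ar R L ct s p t) t' \<Longrightarrow>
         norm_run ar R L sel t reds ct t'"
| red:  "buds ct \<noteq> {} \<or> reds \<noteq> {} \<Longrightarrow> sel ct reds = Inr (rl,p) \<Longrightarrow>
         norm_run ar R L sel (rewrite_at t rl p)
            (reds - \<Union>{matches ar R L s q t | s q. (s,q) \<in> nodes_at L ct p})
            (prune L p ct) t' \<Longrightarrow>
         norm_run ar R L sel t reds ct t'"

definition normalize_returns :: "('f \<Rightarrow> nat) \<Rightarrow> ('f,'v) rule set \<Rightarrow> (('f,'v) state \<Rightarrow> pos)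
                                 \<Rightarrow> ('f,'v) selector \<Rightarrow> ('f,'v) term \<Rightarrow> ('f,'v) term \<Rightarrow> bool" where
  "normalize_returns ar R L sel t0 t \<longleftrightarrow> norm_run ar R L sel t0 {} (Bud (s0 R) []) t"

end

theory Submission
  imports Defs
begin

fun tsym :: "('f,'v) term \<Rightarrow> 'f option" where
  "tsym (Var x) = None"
| "tsym (Fun f ts) = Some f"

definition nonvar :: "('f,'v) term \<Rightarrow> pos \<Rightarrow> bool" where
  "nonvar l w \<longleftrightarrow> in_poss w l \<and> tsym (subt l w) \<noteq> None"

definition pm :: "('f,'v) term \<Rightarrow> ('f,'v) term \<Rightarrow> pos \<Rightarrow> bool" where
  "pm l t y \<longleftrightarrow> (\<forall>w. nonvar l w \<longrightarrow> in_poss (y @ w) t \<and> tsym (subt t (y @ w)) = tsym (subt l w))"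

lemma subt_append: "subt t (p @ q) = subt (subt t p) q"
proof (induction t p rule: subt.induct)
  case (3 x i p)
  then show ?case by (cases q) auto
qed auto

lemma in_poss_append: "in_poss (p @ q) t \<longleftrightarrow> in_poss p t \<and> in_poss q (subt t p)"
  by (induction p t rule: in_poss.induct) auto

lemma subt_Var: "subt (Var x) p = Var x"
  by (cases p) auto

lemma nonvar_prefix: "nonvar l w \<Longrightarrow> prefix w' w \<Longrightarrow> nonvar l w'"
proof -
  assume a: "nonvar l w" "prefix w' w"
  then obtain r where w: "w = w' @ r" by (auto simp: prefix_def)
  with a have "in_poss w' l" by (auto simp: nonvar_def in_poss_append)
  moreover have "tsym (subt l w') \<noteq> None"
  proof
    assume "tsym (subt l w') = None"
    then obtain x where "subt l w' = Var x" by (cases "subt l w'") auto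
    with a w show False by (auto simp: nonvar_def subt_append subt_Var)
  qed
  ultimately show ?thesis by (simp add: nonvar_def)
qed

lemma wf_subt: "wf_term F ar t \<Longrightarrow> in_poss p t \<Longrightarrow> wf_term F ar (subt t p)"
  by (induction p t rule: in_poss.induct) auto

lemma vars_subt: "in_poss p t \<Longrightarrow> vars (subt t p) \<subseteq> vars t"
proof (induction p t rule: in_poss.induct)
  case (3 i p f ts)
  then have "ts ! (i - 1) \<in> set ts" by auto
  with 3 show ?case by auto
qed auto

lemma ground_subt_Fun: "ground t \<Longrightarrow> in_poss p t \<Longrightarrow> tsym (subt t p) \<noteq> None"
proof -
  assume "ground t" "in_poss p t"
  then have "vars (subt t p) = {}" using vars_subt unfolding ground_def by blast
  then show ?thesis by (cases "subt t p") auto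
qed

lemma in_poss_child:
  assumes "wf_term F ar t" "in_poss x t" "tsym (subt t x) = Some f" "1 \<le> i" "i \<le> ar f"
  shows "in_poss (x @ [i]) t"
proof -
  obtain ts where "subt t x = Fun f ts" using assms(3) by (cases "subt t x") auto
  moreover have "wf_term F ar (subt t x)" using wf_subt assms by blast
  ultimately show ?thesis using assms by (auto simp: in_poss_append)
qed

lemma in_poss_child_bound:
  assumes "wf_term F ar t" "in_poss (x @ [i]) t" "tsym (subt t x) = Some f"
  shows "1 \<le> i \<and> i \<le> ar f"
proof -
  obtain ts where "subt t x = Fun f ts" using assms(3) by (cases "subt t x") auto
  moreover have "wf_term F ar (subt t x)" using wf_subt assms in_poss_append by blast
  ultimately show ?thesis using assms by (auto simp: in_poss_append)
qed

lemma in_poss_prefix: "in_poss q t \<Longrightarrow> prefix p q \<Longrightarrow> in_poss p t"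
  by (auto simp: prefix_def in_poss_append)

lemma replace_in_poss_same:
  "in_poss p t \<Longrightarrow> in_poss p (replace_at t p u) \<and> subt (replace_at t p u) p = u"
  by (induction t p u rule: replace_at.induct) auto

lemma replace_other:
  "in_poss p t \<Longrightarrow> \<not> prefix p q \<Longrightarrow>
   in_poss q (replace_at t p u) = in_poss q t \<and> (in_poss q t \<longrightarrow> tsym (subt (replace_at t p u) q) = tsym (subt t q))"
proof (induction q arbitrary: t p)
  case Nil
  then show ?case by (cases p; cases t) auto
next
  case (Cons i q)
  then obtain j p' where p: "p = j # p'" by (cases p) auto
  from Cons obtain f ts where t: "t = Fun f ts" using p by (cases t) auto
  show ?case
  proof (cases "i = j")
    case True
    with Cons p t have ip: "in_poss p' (ts ! (j - 1))" and np: "\<not> prefix p' q" by auto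
    from Cons.IH[OF ip np] p t True Cons.prems show ?thesis by auto
  next
    case False
    have "i - 1 \<noteq> j - 1 \<or> i = 0 \<or> j = 0" using False by auto
    with Cons p t False show ?thesis by (auto simp: nth_list_update)
  qed
qed

lemma wf_replace: "wf_term F ar t \<Longrightarrow> wf_term F ar u \<Longrightarrow> in_poss p t \<Longrightarrow> wf_term F ar (replace_at t p u)"
proof (induction t p u rule: replace_at.induct)
  case (2 f ts i p u)
  then show ?case by (auto simp: set_update_memI  dest!: set_update_subset_insert[THEN subsetD])
qed auto

lemma vars_replace: "in_poss p t \<Longrightarrow> vars (replace_at t p u) \<subseteq> vars t \<union> vars u"
proof (induction t p u rule: replace_at.induct)
  case (2 f ts i p u)
  then show ?case
    apply (auto dest!: set_update_subset_insert[THEN subsetD])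
    by (metis One_nat_def Suc_le_eq Suc_pred' Un_iff le_eq_less_or_eq nth_mem subsetD)
qed auto

lemma vars_subst: "vars (subst \<sigma> t) = (\<Union>x\<in>vars t. vars (\<sigma> x))"
  by (induction t) auto

lemma wf_subst_var: "wf_term F ar (subst \<sigma> t) \<Longrightarrow> x \<in> vars t \<Longrightarrow> wf_term F ar (\<sigma> x)"
  by (induction t) auto

lemma wf_subst: "wf_term F ar t \<Longrightarrow> (\<And>x. x \<in> vars t \<Longrightarrow> wf_term F ar (\<sigma> x)) \<Longrightarrow> wf_term F ar (subst \<sigma> t)"
  by (induction t) auto

lemma subst_pm:
  assumes "in_poss y t" "subt t y = subst \<sigma> l"
  shows "pm l t y"
  unfolding pm_def
proof (intro allI impI)
  fix w assume "nonvar l w"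
  then have io: "in_poss w l" and nv: "tsym (subt l w) \<noteq> None" by (auto simp: nonvar_def)
  have "in_poss w (subst \<sigma> l) \<and> tsym (subt (subst \<sigma> l) w) = tsym (subt l w)"
    using io nv
  proof (induction w l rule: in_poss.induct)
    case (1 t) then show ?case by (cases t) auto
  qed auto
  then show "in_poss (y @ w) t \<and> tsym (subt t (y @ w)) = tsym (subt l w)"
    using assms by (simp add: in_poss_append subt_append)
qed

lemma pm_subst:
  assumes lin: "linear l" and wfl: "wf_term F ar l" and wft: "wf_term F ar t"
    and pm: "pm l t y"
  shows "\<exists>\<sigma>. subt t y = subst \<sigma> l"
proof -
  define \<sigma> where "\<sigma> x = subt t (y @ (SOME q. in_poss q l \<and> subt l q = Var x))" for x
  have "\<forall>w. in_poss w l \<and> subt l w = l' \<longrightarrow> subst \<sigma> l' = subt t (y @ w)" for l'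
  proof (induction l')
    case (Var x)
    show ?case
    proof (intro allI impI)
      fix w assume w: "in_poss w l \<and> subt l w = Var x"
      then have "in_poss (SOME q. in_poss q l \<and> subt l q = Var x) l \<and> subt l (SOME q. in_poss q l \<and> subt l q = Var x) = Var x"
        by (rule someI)
      with w lin have "(SOME q. in_poss q l \<and> subt l q = Var x) = w" unfolding linear_def by blast
      then show "subst \<sigma> (Var x) = subt t (y @ w)" by (simp add: \<sigma>_def)
    qed
  next
    case (Fun f ls)
    show ?case
    proof (intro allI impI)
      fix w assume w: "in_poss w l \<and> subt l w = Fun f ls"
      then have "nonvar l w" by (simp add: nonvar_def)
      with pm have ip: "in_poss (y @ w) t" and s: "tsym (subt t (y @ w)) = Some f"
        using w by (auto simp: pm_def)
      then obtain us where us: "subt t (y @ w) = Fun f us" by (cases "subt t (y @ w)") auto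
      have "wf_term F ar (Fun f us)" using wf_subt[OF wft ip] us by simp
      moreover have "wf_term F ar (Fun f ls)" using wf_subt[OF wfl] w by fastforce
      ultimately have len: "length us = length ls" by simp
      have "map (subst \<sigma>) ls = us"
      proof (rule nth_equalityI)
        show "length (map (subst \<sigma>) ls) = length us" using len by simp
      next
        fix i assume i: "i < length (map (subst \<sigma>) ls)"
        then have i': "i < length ls" by simp
        have "in_poss (w @ [Suc i]) l \<and> subt l (w @ [Suc i]) = ls ! i"
          using w i' by (simp add: in_poss_append subt_append)
        with Fun.IH[of "ls ! i"] i' have "subst \<sigma> (ls ! i) = subt t (y @ w @ [Suc i])" by auto
        also have "\<dots> = us ! i" using us by (simp add: subt_append[of t "y @ w" "[Suc i]", simplified])
        finally show "map (subst \<sigma>) ls ! i = us ! i" using i' by simp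
      qed
      then show "subst \<sigma> (Fun f ls) = subt t (y @ w)" using us by simp
    qed
  qed
  then have "subst \<sigma> l = subt t (y @ [])" by (metis in_poss.simps(1) subt.simps(1))
  then show ?thesis by (metis append_Nil2)
qed

fun readsq :: "(('f,'v) state \<Rightarrow> pos) \<Rightarrow> pos \<Rightarrow> ('f,'v) ctree \<Rightarrow> bool" where
  "readsq L q (Bud s p) = False"
| "readsq L q (Node s p cs) = (p @ L s = q)"

fun isNode :: "('f,'v) ctree \<Rightarrow> bool" where
  "isNode (Bud s p) = False"
| "isNode (Node s p cs) = True"

definition rd :: "(('f,'v) state \<Rightarrow> pos) \<Rightarrow> ('f,'v) ctree \<Rightarrow> pos" where
  "rd L c = snd (root c) @ L (fst (root c))"

primrec paths :: "('f,'v) ctree \<Rightarrow> (('f,'v) ctree list \<times> ('f,'v) ctree) set" where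
  "paths (Bud s p) = {([], Bud s p)}"
| "paths (Node s p cs) = insert ([], Node s p cs)
     (\<Union>(fset (fimage (\<lambda>c. (\<lambda>(a,w). (Node s p cs # a, w)) ` paths c) cs)))"

lemma paths_root: "([], ct) \<in> paths ct"
  by (cases ct) auto

lemma paths_props:
  "(a, w) \<in> paths ct \<Longrightarrow> (\<forall>u\<in>set a. isNode u \<and> u \<in> subtrees ct \<and> w \<in> subtrees u) \<and> w \<in> subtrees ct"
proof (induction ct arbitrary: a w)
  case (Bud s p)
  then show ?case by auto
next
  case (Node s p cs)
  show ?case
  proof (cases "a = []")
    case True
    with Node.prems show ?thesis by auto
  next
    case False
    with Node.prems obtain c a' where c: "c \<in> fset cs" "(a', w) \<in> paths c" "a = Node s p cs # a'"
      by auto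
    from Node.IH[OF c(1) c(2)] c show ?thesis by auto
  qed
qed

lemma paths_bud: "(s,p) \<in> buds ct \<longleftrightarrow> (\<exists>a. (a, Bud s p) \<in> paths ct)"
proof (induction ct)
  case (Bud s' p')
  then show ?case by auto
next
  case (Node s' p' cs)
  show ?case
  proof
    assume "(s,p) \<in> buds (Node s' p' cs)"
    then obtain c where c: "c \<in> fset cs" "(s,p) \<in> buds c" by auto
    with Node.IH obtain a where "(a, Bud s p) \<in> paths c" by blast
    with c show "\<exists>a. (a, Bud s p) \<in> paths (Node s' p' cs)" by force
  next
    assume "\<exists>a. (a, Bud s p) \<in> paths (Node s' p' cs)"
    then obtain a where "(a, Bud s p) \<in> paths (Node s' p' cs)" by blast
    then obtain c a' where c: "c \<in> fset cs" "(a', Bud s p) \<in> paths c" by auto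
    with Node.IH show "(s,p) \<in> buds (Node s' p' cs)" by auto
  qed
qed

lemma paths_node: "(s,p) \<in> nodes ct \<longleftrightarrow> (\<exists>a cs. (a, Node s p cs) \<in> paths ct)"
proof (induction ct)
  case (Bud s' p')
  then show ?case by auto
next
  case (Node s' p' cs')
  show ?case
  proof
    assume "(s,p) \<in> nodes (Node s' p' cs')"
    then have "(s,p) = (s',p') \<or> (\<exists>c\<in>fset cs'. (s,p) \<in> nodes c)" by simp
    then show "\<exists>a cs. (a, Node s p cs) \<in> paths (Node s' p' cs')"
    proof
      assume "(s,p) = (s',p')" then show ?thesis by (intro exI[of _ "[]"] exI[of _ cs']) simp
    next
      assume "\<exists>c\<in>fset cs'. (s,p) \<in> nodes c"
      then obtain c where c: "c \<in> fset cs'" "(s,p) \<in> nodes c" by blast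
      with Node.IH obtain a cs where "(a, Node s p cs) \<in> paths c" by blast
      with c show ?thesis
        by (intro exI[of _ "Node s' p' cs' # a"] exI[of _ cs]) (simp, rule bexI[of _ c], force, simp)
    qed
  next
    assume "\<exists>a cs. (a, Node s p cs) \<in> paths (Node s' p' cs')"
    then obtain a cs where a: "(a, Node s p cs) \<in> paths (Node s' p' cs')" by blast
    show "(s,p) \<in> nodes (Node s' p' cs')"
    proof (cases a)
      case Nil
      with a show ?thesis by auto
    next
      case (Cons u a')
      with a obtain c where c: "c \<in> fset cs'" "(a', Node s p cs) \<in> paths c" by auto
      with Node.IH[OF c(1)] have "(s,p) \<in> nodes c" by blast
      with c show ?thesis by auto
    qed
  qed
qed

lemma paths_prefix: "(pre @ u # post, w) \<in> paths ct \<Longrightarrow> (pre, u) \<in> paths ct"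
proof (induction ct arbitrary: pre u post w)
  case (Bud s p)
  then show ?case by auto
next
  case (Node s p cs)
  from Node.prems obtain c a' where c: "c \<in> fset cs" "(a', w) \<in> paths c" "pre @ u # post = Node s p cs # a'"
    by auto
  show ?case
  proof (cases pre)
    case Nil
    with c show ?thesis by auto
  next
    case (Cons x pre')
    with c have "a' = pre' @ u # post" "x = Node s p cs" by auto
    with Node.IH[OF c(1)] c Cons show ?thesis by force
  qed
qed

lemma subtrees_trans: "c \<in> subtrees ct \<Longrightarrow> d \<in> subtrees c \<Longrightarrow> d \<in> subtrees ct"
  by (induction ct) auto

lemma subtrees_nodes: "c \<in> subtrees ct \<Longrightarrow> nodes c \<subseteq> nodes ct \<and> buds c \<subseteq> buds ct"
  by (induction ct) auto

lemma subtrees_self: "ct \<in> subtrees ct"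
  by (cases ct) auto

lemma root_in_nodes: "isNode c \<Longrightarrow> root c \<in> nodes c"
  by (cases c) auto

lemma root_in_buds: "\<not> isNode c \<Longrightarrow> root c \<in> buds c"
  by (cases c) auto

lemma grow_root: "root (grow_rep new s p c) = root c"
  by (cases c) auto

lemma grow_isNode: "isNode c \<Longrightarrow> isNode (grow_rep new s p c)"
  by (cases c) auto

lemma rd_grow: "rd L (grow_rep new s p c) = rd L c"
  by (simp add: rd_def grow_root)

lemma paths_grow1:
  "(a, w) \<in> paths ct \<Longrightarrow> (map (grow_rep new s p) a, grow_rep new s p w) \<in> paths (grow_rep new s p ct)"
proof (induction ct arbitrary: a w)
  case (Bud s' p')
  then show ?case by (auto intro: paths_root)
next
  case (Node s' p' cs)
  show ?case
  proof (cases "a = []")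
    case True
    with Node.prems show ?thesis by auto
  next
    case False
    with Node.prems obtain c a' where c: "c \<in> fset cs" "(a', w) \<in> paths c" "a = Node s' p' cs # a'"
      by auto
    from Node.IH[OF c(1) c(2)] c show ?thesis by force
  qed
qed

lemma paths_NodeI: "(Node s p cs # a, w) \<in> paths (Node s p cs)" if "c \<in> fset cs" "(a,w) \<in> paths c"
proof -
  have "(Node s p cs # a, w) \<in> (\<lambda>(a,w). (Node s p cs # a, w)) ` paths c"
    by (rule image_eqI[of _ _ "(a,w)"]) (auto simp: that)
  then show ?thesis using that by (simp only: paths.simps fimage.rep_eq) blast
qed

lemma paths_bud_only: "\<not> isNode b \<Longrightarrow> paths b = {([], b)}"
  by (cases b) auto

lemma paths_grow_new:
  assumes "(a, Bud s p) \<in> paths ct" "b \<in> fset new" "\<forall>b\<in>fset new. \<not> isNode b"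
  shows "(map (grow_rep new s p) a @ [Node s p new], b) \<in> paths (grow_rep new s p ct)"
  using assms
proof (induction ct arbitrary: a)
  case (Bud s' p')
  then have a: "a = []" "s' = s" "p' = p" by auto
  have "([], b) \<in> paths b" using Bud.prems paths_bud_only by blast
  from paths_NodeI[OF Bud.prems(2) this] have "([Node s p new], b) \<in> paths (Node s p new)"
    by simp
  with a show ?case by simp
next
  case (Node s' p' cs)
  from Node.prems obtain c a' where c: "c \<in> fset cs" "(a', Bud s p) \<in> paths c" "a = Node s' p' cs # a'"
    by auto
  from Node.IH[OF c(1) c(2)] Node.prems have "(map (grow_rep new s p) a' @ [Node s p new], b) \<in> paths (grow_rep new s p c)"
    by blast
  with c show ?case using paths_NodeI[of "grow_rep new s p c" "fimage (grow_rep new s p) cs"] by auto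
qed

lemma paths_NodeE:
  assumes "(a,w) \<in> paths (Node s p cs)"
  shows "(a = [] \<and> w = Node s p cs) \<or> (\<exists>c a'. c \<in> fset cs \<and> (a',w) \<in> paths c \<and> a = Node s p cs # a')"
proof -
  have "(a,w) = ([], Node s p cs) \<or> (\<exists>c\<in>fset cs. (a,w) \<in> (\<lambda>(a,w). (Node s p cs # a, w)) ` paths c)"
    using assms by (simp only: paths.simps fimage.rep_eq) blast
  then show ?thesis
  proof
    assume "\<exists>c\<in>fset cs. (a,w) \<in> (\<lambda>(a,w). (Node s p cs # a, w)) ` paths c"
    then obtain c x where "c \<in> fset cs" "x \<in> paths c" "(a,w) = (\<lambda>(a,w). (Node s p cs # a, w)) x" by blast
    then show ?thesis by (cases x) auto
  qed auto
qed

lemma paths_grow2: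
  assumes "(a', w') \<in> paths (grow_rep new s p ct)" "\<forall>b\<in>fset new. \<not> isNode b"
  shows "(\<exists>a w. (a,w) \<in> paths ct \<and> a' = map (grow_rep new s p) a \<and> w' = grow_rep new s p w)
       \<or> (\<exists>a. (a, Bud s p) \<in> paths ct \<and> w' \<in> fset new \<and> a' = map (grow_rep new s p) a @ [Node s p new])"
  using assms
proof (induction ct arbitrary: a' w')
  case (Bud s' p')
  show ?case
  proof (cases "s' = s \<and> p' = p")
    case True
    with Bud have "(a', w') \<in> paths (Node s p new)" by simp
    from paths_NodeE[OF this] show ?thesis
    proof
      assume "a' = [] \<and> w' = Node s p new"
      with True show ?thesis
        by (intro disjI1 exI[of _ "[]"] exI[of _ "Bud s p"]) simp
    next
      assume "\<exists>c a''. c \<in> fset new \<and> (a'', w') \<in> paths c \<and> a' = Node s p new # a''"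
      then obtain c a'' where c: "c \<in> fset new" "(a'', w') \<in> paths c" "a' = Node s p new # a''" by blast
      with Bud.prems(2) have "paths c = {([], c)}" using paths_bud_only by blast
      with c have "a'' = []" "w' = c" by auto
      with c True show ?thesis by (intro disjI2 exI[of _ "[]"]) simp
    qed
  next
    case False
    with Bud have "a' = []" "w' = Bud s' p'" by auto
    with False show ?thesis by (intro disjI1 exI[of _ "[]"] exI[of _ "Bud s' p'"]) simp
  qed
next
  case (Node s' p' cs)
  have "(a', w') \<in> paths (Node s' p' (fimage (grow_rep new s p) cs))" using Node.prems(1) by simp
  from paths_NodeE[OF this] show ?case
  proof
    assume "a' = [] \<and> w' = Node s' p' (fimage (grow_rep new s p) cs)"
    then show ?thesis by (intro disjI1 exI[of _ "[]"] exI[of _ "Node s' p' cs"]) simp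
  next
    assume "\<exists>c a''. c \<in> fset (fimage (grow_rep new s p) cs) \<and> (a'', w') \<in> paths c \<and> a' = Node s' p' (fimage (grow_rep new s p) cs) # a''"
    then obtain c0 a'' where c0: "c0 \<in> fset (fimage (grow_rep new s p) cs)" "(a'', w') \<in> paths c0" "a' = Node s' p' (fimage (grow_rep new s p) cs) # a''"
      by blast
    then obtain c where c: "c \<in> fset cs" "c0 = grow_rep new s p c" by (auto simp: fimage.rep_eq)
    have gN: "grow_rep new s p (Node s' p' cs) = Node s' p' (fimage (grow_rep new s p) cs)" by simp
    have "(a'', w') \<in> paths (grow_rep new s p c)" using c0 c by simp
    from Node.IH[OF c(1) this Node.prems(2)] show ?thesis
    proof (elim disjE exE conjE)
      fix a w assume "(a, w) \<in> paths c" "a'' = map (grow_rep new s p) a" "w' = grow_rep new s p w"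
      then show ?thesis using c0 c paths_NodeI[OF c(1), of a w s' p'] gN
        by (intro disjI1 exI[of _ "Node s' p' cs # a"] exI[of _ w]) simp
    next
      fix a assume "(a, Bud s p) \<in> paths c" "w' \<in> fset new" "a'' = map (grow_rep new s p) a @ [Node s p new]"
      then show ?thesis using c0 c paths_NodeI[OF c(1), of a "Bud s p" s' p'] gN
        by (intro disjI2 exI[of _ "Node s' p' cs # a"]) simp
    qed
  qed
qed

lemma grow_subtrees:
  "c' \<in> subtrees (grow_rep new s p ct) \<Longrightarrow> (\<exists>c\<in>subtrees ct. c' = grow_rep new s p c) \<or> (c' \<in> (\<Union>b\<in>fset new. subtrees b) \<and> (s,p) \<in> buds ct)"
  by (induction ct) (auto split: if_splits)

lemma grow_nodes_buds:
  "x \<in> nodes (grow_rep new s p c) \<union> buds (grow_rep new s p c) \<Longrightarrow>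
   x \<in> nodes c \<union> buds c \<or> ((s,p) \<in> buds c \<and> (\<exists>b\<in>fset new. x \<in> nodes b \<union> buds b))"
proof (induction c)
  case (Bud s' p')
  then show ?case by (auto split: if_splits)
next
  case (Node s' p' cs)
  from Node.prems have "x = (s',p') \<or> (\<exists>c\<in>fset cs. x \<in> nodes (grow_rep new s p c) \<union> buds (grow_rep new s p c))"
    by (auto simp: fimage.rep_eq)
  then show ?case
  proof
    assume "\<exists>c\<in>fset cs. x \<in> nodes (grow_rep new s p c) \<union> buds (grow_rep new s p c)"
    then obtain c where c: "c \<in> fset cs" "x \<in> nodes (grow_rep new s p c) \<union> buds (grow_rep new s p c)" by blast
    from Node.IH[OF c] c(1) show ?thesis by auto
  qed simp
qed

lemma grow_buds_keep:
  "(s',p') \<in> buds ct \<Longrightarrow> (s',p') \<noteq> (s,p) \<Longrightarrow> (s',p') \<in> buds (grow_rep new s p ct)"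
  by (induction ct) auto

lemma grow_buds_new:
  "(s,p) \<in> buds ct \<Longrightarrow> b \<in> fset new \<Longrightarrow> buds b \<subseteq> buds (grow_rep new s p ct)"
  by (induction ct) auto

lemma prune_root: "root (prune L q c) = root c"
  by (cases c) auto

lemma rd_prune: "rd L (prune L q c) = rd L c"
  by (simp add: rd_def prune_root)

lemma prune_reads: "readsq L q c \<Longrightarrow> prune L q c = Bud (fst (root c)) (snd (root c))"
  by (cases c) auto

lemma prune_isNode: "isNode c \<Longrightarrow> \<not> readsq L q c \<Longrightarrow> isNode (prune L q c)"
  by (cases c) auto

lemma readsq_rd: "isNode c \<Longrightarrow> readsq L q c \<longleftrightarrow> rd L c = q"
  by (cases c) (auto simp: rd_def)

lemma prune_Node: "prune L q (Node s p cs) = (if p @ L s = q then Bud s p else Node s p (fimage (prune L q) cs))"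
  by simp

lemma paths_prune1:
  "(a, w) \<in> paths ct \<Longrightarrow> \<forall>u\<in>set a. \<not> readsq L q u \<Longrightarrow> (map (prune L q) a, prune L q w) \<in> paths (prune L q ct)"
proof (induction ct arbitrary: a w)
  case (Bud s' p')
  then show ?case by auto
next
  case (Node s' p' cs)
  from paths_NodeE[OF Node.prems(1)] show ?case
  proof
    assume "a = [] \<and> w = Node s' p' cs"
    then show ?thesis using paths_root by simp
  next
    assume "\<exists>c a'. c \<in> fset cs \<and> (a', w) \<in> paths c \<and> a = Node s' p' cs # a'"
    then obtain c a' where c: "c \<in> fset cs" "(a', w) \<in> paths c" "a = Node s' p' cs # a'" by blast
    with Node.prems have nq: "\<not> p' @ L s' = q" "\<forall>u\<in>set a'. \<not> readsq L q u" by auto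
    have IH: "(map (prune L q) a', prune L q w) \<in> paths (prune L q c)" using Node.IH[OF c(1) c(2) nq(2)] .
    have "prune L q c \<in> fset (fimage (prune L q) cs)" using c(1) by (simp add: fimage.rep_eq)
    from paths_NodeI[OF this IH, of s' p'] nq(1) c(3) show ?thesis by simp
  qed
qed

lemma paths_prune2:
  "(a', w') \<in> paths (prune L q ct) \<Longrightarrow> \<exists>a w. (a, w) \<in> paths ct \<and> (\<forall>u\<in>set a. \<not> readsq L q u) \<and> a' = map (prune L q) a \<and> w' = prune L q w"
proof (induction ct arbitrary: a' w')
  case (Bud s' p')
  then show ?case by (intro exI[of _ "[]"] exI[of _ "Bud s' p'"]) auto
next
  case (Node s' p' cs)
  show ?case
  proof (cases "p' @ L s' = q")
    case True
    with Node.prems have "a' = []" "w' = Bud s' p'" by auto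
    with True show ?thesis by (intro exI[of _ "[]"] exI[of _ "Node s' p' cs"]) (simp add: paths_root)
  next
    case False
    with Node.prems have "(a', w') \<in> paths (Node s' p' (fimage (prune L q) cs))" by simp
    from paths_NodeE[OF this] show ?thesis
    proof
      assume "a' = [] \<and> w' = Node s' p' (fimage (prune L q) cs)"
      with False show ?thesis by (intro exI[of _ "[]"] exI[of _ "Node s' p' cs"]) (simp add: paths_root)
    next
      assume "\<exists>c a''. c \<in> fset (fimage (prune L q) cs) \<and> (a'', w') \<in> paths c \<and> a' = Node s' p' (fimage (prune L q) cs) # a''"
      then obtain c0 a'' where c0: "c0 \<in> fset (fimage (prune L q) cs)" "(a'', w') \<in> paths c0" "a' = Node s' p' (fimage (prune L q) cs) # a''"
        by blast
      then obtain c where c: "c \<in> fset cs" "c0 = prune L q c" by (auto simp: fimage.rep_eq)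
      with c0 have "(a'', w') \<in> paths (prune L q c)" by simp
      from Node.IH[OF c(1) this] obtain a w where aw: "(a, w) \<in> paths c" "\<forall>u\<in>set a. \<not> readsq L q u" "a'' = map (prune L q) a" "w' = prune L q w"
        by blast
      have "(Node s' p' cs # a, w) \<in> paths (Node s' p' cs)" by (rule paths_NodeI[OF c(1) aw(1)])
      with aw c0 False show ?thesis by (intro exI[of _ "Node s' p' cs # a"] exI[of _ w]) simp
    qed
  qed
qed

lemma prune_first_reader:
  "c \<in> subtrees ct \<Longrightarrow> readsq L q c \<Longrightarrow>
   \<exists>c0\<in>subtrees ct. readsq L q c0 \<and> c \<in> subtrees c0 \<and> root c0 \<in> buds (prune L q ct)"
proof (induction ct)
  case (Bud s p)
  then show ?case by auto
next
  case (Node s p cs)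
  show ?case
  proof (cases "p @ L s = q")
    case True
    then have "root (Node s p cs) \<in> buds (prune L q (Node s p cs))" by simp
    with Node.prems True show ?thesis by (intro bexI[of _ "Node s p cs"]) (auto simp: subtrees_self)
  next
    case False
    with Node.prems have "c \<noteq> Node s p cs" by auto
    with Node.prems obtain c' where c': "c' \<in> fset cs" "c \<in> subtrees c'" by auto
    from Node.IH[OF c' Node.prems(2)] obtain c0 where c0: "c0 \<in> subtrees c'" "readsq L q c0" "c \<in> subtrees c0" "root c0 \<in> buds (prune L q c')"
      by blast
    have "buds (prune L q c') \<subseteq> buds (prune L q (Node s p cs))"
      using False c'(1) by (auto simp: fimage.rep_eq)
    moreover have "c0 \<in> subtrees (Node s p cs)" using c0(1) c'(1) by auto
    ultimately show ?thesis using c0 by blast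
  qed
qed

lemma prune_buds:
  "(s,p) \<in> buds ct \<Longrightarrow> (s,p) \<in> buds (prune L q ct) \<or> (\<exists>c\<in>subtrees ct. readsq L q c \<and> (s,p) \<in> buds c)"
proof (induction ct)
  case (Bud s' p')
  then show ?case by auto
next
  case (Node s' p' cs)
  show ?case
  proof (cases "p' @ L s' = q")
    case True
    with Node.prems show ?thesis by (intro disjI2 bexI[of _ "Node s' p' cs"]) (auto simp: subtrees_self)
  next
    case False
    with Node.prems obtain c where c: "c \<in> fset cs" "(s,p) \<in> buds c" by auto
    from Node.IH[OF c] show ?thesis
    proof
      assume "(s, p) \<in> buds (prune L q c)"
      with False c show ?thesis by (auto simp: fimage.rep_eq)
    next
      assume "\<exists>c'\<in>subtrees c. readsq L q c' \<and> (s, p) \<in> buds c'"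
      with c show ?thesis by auto
    qed
  qed
qed

lemma prune_subtrees: "c' \<in> subtrees (prune L q ct) \<Longrightarrow> \<exists>c\<in>subtrees ct. c' = prune L q c"
proof (induction ct)
  case (Bud s p)
  then show ?case by auto
next
  case (Node s p cs)
  show ?case
  proof (cases "p @ L s = q")
    case True
    with Node.prems show ?thesis by (intro bexI[of _ "Node s p cs"]) (auto simp: subtrees_self)
  next
    case False
    with Node.prems have "c' = prune L q (Node s p cs) \<or> (\<exists>c\<in>fset cs. c' \<in> subtrees (prune L q c))"
      by (auto simp: fimage.rep_eq)
    then show ?thesis
    proof
      assume "\<exists>c\<in>fset cs. c' \<in> subtrees (prune L q c)"
      then obtain c where c: "c \<in> fset cs" "c' \<in> subtrees (prune L q c)" by blast
      from Node.IH[OF c] c(1) show ?thesis by auto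
    qed (auto simp: subtrees_self)
  qed
qed

lemma prune_nodes_buds: "x \<in> nodes (prune L q c) \<union> buds (prune L q c) \<Longrightarrow> x \<in> nodes c \<union> buds c"
proof (induction c)
  case (Bud s p)
  then show ?case by auto
next
  case (Node s p cs)
  show ?case
  proof (cases "p @ L s = q")
    case True
    with Node.prems show ?thesis by auto
  next
    case False
    with Node.prems have "x = (s,p) \<or> (\<exists>c\<in>fset cs. x \<in> nodes (prune L q c) \<union> buds (prune L q c))"
      by (auto simp: fimage.rep_eq)
    then show ?thesis
    proof
      assume "\<exists>c\<in>fset cs. x \<in> nodes (prune L q c) \<union> buds (prune L q c)"
      then obtain c where c: "c \<in> fset cs" "x \<in> nodes (prune L q c) \<union> buds (prune L q c)" by blast
      from Node.IH[OF c] c(1) show ?thesis by auto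
    qed simp
  qed
qed

lemma nodes_at_intro:
  assumes "u \<in> subtrees ct" "readsq L q u" "v \<in> subtrees u" "isNode v"
  shows "root v \<in> nodes_at L ct q"
proof -
  obtain s p cs where u: "u = Node s p cs" "p @ L s = q" using assms(2) by (cases u) auto
  have "root v \<in> nodes u" using root_in_nodes[OF assms(4)] subtrees_nodes[OF assms(3)] by blast
  moreover have "snd (root u) @ L (fst (root u)) = q" using u by simp
  ultimately show ?thesis unfolding nodes_at_def using assms(1) by blast
qed

section \<open>Shifting goals\<close>

definition shm :: "pos \<Rightarrow> ('f,'v) obl \<Rightarrow> ('f,'v) obl" where
  "shm p mo = (\<lambda>(l',w). (l', p @ w)) ` mo"

definition shg :: "pos \<Rightarrow> ('f,'v) goal \<Rightarrow> ('f,'v) goal" where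
  "shg p g = (shm p (fst g), (fst (snd g), p @ snd (snd g)))"

definition agoals :: "('f,'v) state \<Rightarrow> pos \<Rightarrow> ('f,'v) state" where
  "agoals s p = shg p ` s"

definition obpos :: "('f,'v) state \<Rightarrow> pos set" where
  "obpos G = {z. \<exists>mo ma l'. (mo,ma) \<in> G \<and> (l',z) \<in> mo}"

definition wfgoals :: "('f,'v) rule set \<Rightarrow> ('f,'v) state \<Rightarrow> bool" where
  "wfgoals R s \<longleftrightarrow> (\<forall>mo l a. (mo,(l,a)) \<in> s \<longrightarrow> l \<in> lhss R \<and> mo \<noteq> {} \<and>
      (\<forall>l' z. (l',z) \<in> mo \<longrightarrow> (\<exists>w. z = a @ w \<and> nonvar l w \<and> subt l w = l')))"

definition fresh :: "('f,'v) rule set \<Rightarrow> ('f,'v) state \<Rightarrow> bool" where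
  "fresh R s \<longleftrightarrow> (\<forall>mo ma l' z l0. (mo,ma) \<in> s \<longrightarrow> (l',z) \<in> mo \<longrightarrow> l0 \<in> lhss R \<longrightarrow> ({(l0,z)},(l0,z)) \<in> s)"

definition SI :: "('f,'v) rule set \<Rightarrow> ('f,'v) state \<Rightarrow> bool" where
  "SI R s \<longleftrightarrow> finite s \<and> wfgoals R s \<and> fresh R s"

lemma shm_mem: "(l', z) \<in> shm p mo \<longleftrightarrow> (\<exists>w. z = p @ w \<and> (l', w) \<in> mo)"
  by (auto simp: shm_def)

lemma shm_empty[simp]: "shm p mo = {} \<longleftrightarrow> mo = {}"
  by (auto simp: shm_def)

lemma shm_inj: "shm p mo = shm p mo' \<Longrightarrow> mo = mo'"
proof -
  assume e: "shm p mo = shm p mo'"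
  have "(l',w) \<in> mo \<longleftrightarrow> (l',w) \<in> mo'" for l' w
  proof -
    have "(l',w) \<in> mo \<longleftrightarrow> (l', p @ w) \<in> shm p mo" by (simp add: shm_mem)
    also have "\<dots> \<longleftrightarrow> (l', p @ w) \<in> shm p mo'" using e by simp
    also have "\<dots> \<longleftrightarrow> (l',w) \<in> mo'" by (simp add: shm_mem)
    finally show ?thesis .
  qed
  then show ?thesis by auto
qed

lemma shg_simp[simp]: "shg p (mo,(l,a)) = (shm p mo, (l, p @ a))"
  by (simp add: shg_def)

lemma shg_inj: "shg p g = shg p g' \<Longrightarrow> g = g'"
  by (cases g; cases g') (auto dest: shm_inj)

lemma shm_append: "shm (p @ q) mo = shm p (shm q mo)"
  by (auto simp: shm_def image_image case_prod_beta)

lemma shm_Nil[simp]: "shm [] mo = mo"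
  by (auto simp: shm_def)

lemma shm_singleton[simp]: "shm p {(l,z)} = {(l, p @ z)}"
  by (simp add: shm_def)

lemma agoals_mem: "(MO,(l,Y)) \<in> agoals s p \<longleftrightarrow> (\<exists>mo a. (mo,(l,a)) \<in> s \<and> MO = shm p mo \<and> Y = p @ a)"
proof
  assume "(MO,(l,Y)) \<in> agoals s p"
  then obtain g where "g \<in> s" "(MO,(l,Y)) = shg p g" by (auto simp: agoals_def)
  then show "\<exists>mo a. (mo,(l,a)) \<in> s \<and> MO = shm p mo \<and> Y = p @ a" by (cases g) auto
next
  assume "\<exists>mo a. (mo,(l,a)) \<in> s \<and> MO = shm p mo \<and> Y = p @ a"
  then obtain mo a where "(mo,(l,a)) \<in> s" "MO = shm p mo" "Y = p @ a" by blast
  then show "(MO,(l,Y)) \<in> agoals s p" unfolding agoals_def by (force intro: image_eqI[of _ _ "(mo,(l,a))"])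
qed

lemma agoals_append: "agoals s (p @ q) = agoals (agoals s q) p"
  by (auto simp: agoals_def shg_def image_image shm_append)

lemma agoals_Nil[simp]: "agoals s [] = s"
  by (auto simp: agoals_def shg_def)

lemma obpos_agoals: "obpos (agoals s p) = (\<lambda>z. p @ z) ` obpos s"
proof (rule set_eqI)
  fix z
  show "z \<in> obpos (agoals s p) \<longleftrightarrow> z \<in> (\<lambda>z. p @ z) ` obpos s"
  proof
    assume "z \<in> obpos (agoals s p)"
    then obtain MO ma l' where a: "(MO,ma) \<in> agoals s p" "(l',z) \<in> MO" unfolding obpos_def by blast
    obtain l Y where "ma = (l,Y)" by (cases ma)
    with a obtain mo b where "(mo,(l,b)) \<in> s" "MO = shm p mo" by (auto simp: agoals_mem)
    with a obtain z' where "z = p @ z'" "(l',z') \<in> mo" by (auto simp: shm_mem)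
    then show "z \<in> (\<lambda>z. p @ z) ` obpos s" using \<open>(mo,(l,b)) \<in> s\<close> unfolding obpos_def by blast
  next
    assume "z \<in> (\<lambda>z. p @ z) ` obpos s"
    then obtain z' mo ma l' where a: "z = p @ z'" "(mo,ma) \<in> s" "(l',z') \<in> mo" unfolding obpos_def by blast
    obtain l b where "ma = (l,b)" by (cases ma)
    with a have "(shm p mo, (l, p @ b)) \<in> agoals s p" "(l', z) \<in> shm p mo" by (auto simp: agoals_mem shm_mem)
    then show "z \<in> obpos (agoals s p)" unfolding obpos_def by blast
  qed
qed

lemma wfgoals_agoals: "wfgoals R (agoals s p) \<longleftrightarrow> wfgoals R s"
proof
  assume w: "wfgoals R s"
  show "wfgoals R (agoals s p)"
    unfolding wfgoals_def
  proof (intro allI impI)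
    fix MO l Y assume "(MO,(l,Y)) \<in> agoals s p"
    then obtain mo a where g: "(mo,(l,a)) \<in> s" "MO = shm p mo" "Y = p @ a" by (auto simp: agoals_mem)
    with w show "l \<in> lhss R \<and> MO \<noteq> {} \<and> (\<forall>l' z. (l',z) \<in> MO \<longrightarrow> (\<exists>w. z = Y @ w \<and> nonvar l w \<and> subt l w = l'))"
      unfolding wfgoals_def by (auto simp: shm_mem)
  qed
next
  assume w: "wfgoals R (agoals s p)"
  show "wfgoals R s"
    unfolding wfgoals_def
  proof (intro allI impI)
    fix mo l a assume g: "(mo,(l,a)) \<in> s"
    then have "(shm p mo, (l, p @ a)) \<in> agoals s p" by (auto simp: agoals_mem)
    with w have "l \<in> lhss R \<and> shm p mo \<noteq> {} \<and> (\<forall>l' z. (l',z) \<in> shm p mo \<longrightarrow> (\<exists>w. z = (p @ a) @ w \<and> nonvar l w \<and> subt l w = l'))"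
      unfolding wfgoals_def by blast
    then show "l \<in> lhss R \<and> mo \<noteq> {} \<and> (\<forall>l' z. (l',z) \<in> mo \<longrightarrow> (\<exists>w. z = a @ w \<and> nonvar l w \<and> subt l w = l'))"
      by (auto simp: shm_mem)
  qed
qed

lemma fresh_agoals: "fresh R (agoals s p) \<longleftrightarrow> fresh R s"
proof
  assume w: "fresh R s"
  show "fresh R (agoals s p)"
    unfolding fresh_def
  proof (intro allI impI)
    fix MO ma l' z l0 assume a: "(MO, ma) \<in> agoals s p" "(l', z) \<in> MO" "l0 \<in> lhss R"
    obtain l Y where ma: "ma = (l,Y)" by (cases ma)
    with a obtain mo b where g: "(mo,(l,b)) \<in> s" "MO = shm p mo" by (auto simp: agoals_mem)
    with a obtain z' where z: "z = p @ z'" "(l',z') \<in> mo" by (auto simp: shm_mem)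
    with w g a have "({(l0,z')},(l0,z')) \<in> s" unfolding fresh_def by blast
    then show "({(l0, z)}, l0, z) \<in> agoals s p" using z by (force simp: agoals_mem)
  qed
next
  assume w: "fresh R (agoals s p)"
  show "fresh R s"
    unfolding fresh_def
  proof (intro allI impI)
    fix mo ma l' z l0 assume a: "(mo, ma) \<in> s" "(l', z) \<in> mo" "l0 \<in> lhss R"
    obtain l b where ma: "ma = (l,b)" by (cases ma)
    with a have "(shm p mo, (l, p @ b)) \<in> agoals s p" "(l', p @ z) \<in> shm p mo" by (auto simp: agoals_mem shm_mem)
    with w a have "({(l0, p @ z)},(l0,p @ z)) \<in> agoals s p" unfolding fresh_def by blast
    then obtain mo' a' where "(mo',(l0,a')) \<in> s" "{(l0, p @ z)} = shm p mo'" "p @ z = p @ a'" by (auto simp: agoals_mem)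
    moreover then have "mo' = {(l0, z)}" using shm_inj[of p mo' "{(l0,z)}"] by simp
    ultimately show "({(l0, z)}, l0, z) \<in> s" by simp
  qed
qed

lemma SI_agoals: "SI R (agoals s p) \<longleftrightarrow> SI R s"
proof -
  have "finite (agoals s p) \<longleftrightarrow> finite s"
    unfolding agoals_def by (rule finite_image_iff) (meson inj_onI shg_inj)
  then show ?thesis by (simp add: SI_def wfgoals_agoals fresh_agoals)
qed

lemma gcp_exists:
  assumes "P \<noteq> {}"
  shows "\<exists>q. (\<forall>p\<in>P. prefix q p) \<and> (\<forall>q'. (\<forall>p\<in>P. prefix q' p) \<longrightarrow> prefix q' q)"
proof -
  obtain p0 where p0: "p0 \<in> P" using assms by blast
  define KS where "KS = {k. k \<le> length p0 \<and> (\<forall>p\<in>P. prefix (take k p0) p)}"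
  have "0 \<in> KS" by (simp add: KS_def)
  have fin: "finite KS" unfolding KS_def by simp
  define k where "k = Max KS"
  have kin: "k \<in> KS" using fin \<open>0 \<in> KS\<close> k_def Max_in by blast
  show ?thesis
  proof (intro exI[of _ "take k p0"] conjI ballI allI impI)
    fix p assume "p \<in> P" then show "prefix (take k p0) p" using kin by (simp add: KS_def)
  next
    fix q' assume q': "\<forall>p\<in>P. prefix q' p"
    then have "prefix q' p0" using p0 by blast
    then have q'eq: "q' = take (length q') p0" by (metis append_eq_conv_conj prefix_def)
    then have "length q' \<in> KS" using q' \<open>prefix q' p0\<close> by (auto simp: KS_def prefix_length_le)
    then have "length q' \<le> k" using fin k_def by simp
    then show "prefix q' (take k p0)" using q'eq
      by (metis prefix_order.eq_iff take_is_prefix take_take min.absorb1 prefix_def append_take_drop_id)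
  qed
qed

lemma gcp_prefix: "P \<noteq> {} \<Longrightarrow> p \<in> P \<Longrightarrow> prefix (gcp P) p"
  unfolding gcp_def using someI_ex[OF gcp_exists] by blast

lemma lift_agoals:
  assumes ne: "K \<noteq> {}" and wf: "wfgoals R K"
  shows "agoals (lift K) (gcp (ann_pos K)) = K"
proof -
  define g where "g = gcp (ann_pos K)"
  define n where "n = length g"
  have pre: "prefix g a" if "(mo,(l,a)) \<in> K" for mo l a
  proof -
    have "a \<in> ann_pos K" unfolding ann_pos_def by (rule image_eqI[where x="(mo,(l,a))"]) (simp_all add: that)
    then show ?thesis unfolding g_def by (intro gcp_prefix) auto
  qed
  have bk: "shg g ((\<lambda>(mo,(l,p)). ((\<lambda>(l',q). (l', drop n q)) ` mo, (l, drop n p))) x) = x" if "x \<in> K" for x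
  proof -
    obtain mo l a where x: "x = (mo,(l,a))" by (cases x) auto
    have pa: "prefix g a" using pre that x by blast
    have pz: "prefix g z" if "(l',z) \<in> mo" for l' z
    proof -
      from wf \<open>x \<in> K\<close> x that obtain w where "z = a @ w" unfolding wfgoals_def by blast
      with pa show ?thesis by (auto simp: prefix_def)
    qed
    have eq: "g @ drop n z = z" if "prefix g z" for z
      using that by (auto simp: prefix_def n_def)
    have "shm g ((\<lambda>(l',q). (l', drop n q)) ` mo) = mo"
    proof (rule set_eqI)
      fix y
      show "y \<in> shm g ((\<lambda>(l',q). (l', drop n q)) ` mo) \<longleftrightarrow> y \<in> mo"
      proof (cases y)
        case (Pair l' z)
        then have y: "y = (l',z)" .
        show ?thesis
      proof
        assume "y \<in> shm g ((\<lambda>(l',q). (l', drop n q)) ` mo)"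
        then obtain z' where "(l', z') \<in> mo" "z = g @ drop n z'" using y by (auto simp: shm_mem)
        with pz eq show "y \<in> mo" using y by metis
      next
        assume "y \<in> mo"
        then have "(l', drop n z) \<in> (\<lambda>(l',q). (l', drop n q)) ` mo" using y by force
        moreover have "z = g @ drop n z" using eq pz \<open>y \<in> mo\<close> y by metis
        ultimately show "y \<in> shm g ((\<lambda>(l',q). (l', drop n q)) ` mo)" using y
          by (simp only: shm_mem) blast
      qed
      qed
    qed
    then show ?thesis using x eq[OF pa] by simp
  qed
  have "lift K = (\<lambda>(mo,(l,p)). ((\<lambda>(l',q). (l', drop n q)) ` mo, (l, drop n p))) ` K"
    unfolding lift_def n_def g_def Let_def by simp
  then have "agoals (lift K) g = (\<lambda>x. shg g ((\<lambda>(mo,(l,p)). ((\<lambda>(l',q). (l', drop n q)) ` mo, (l, drop n p))) x)) ` K"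
    by (simp add: agoals_def image_image)
  also have "\<dots> = K" using bk by simp
  finally show ?thesis unfolding g_def .
qed

section \<open>deriv in absolute terms\<close>

lemma reduce_shm: "shm p (reduce ar mo f q) = reduce ar (shm p mo) f (p @ q)"
proof (rule set_eqI)
  fix y
  show "y \<in> shm p (reduce ar mo f q) \<longleftrightarrow> y \<in> reduce ar (shm p mo) f (p @ q)"
  proof (cases y)
    case (Pair l' z)
    then show ?thesis unfolding shm_mem reduce_def by (auto simp: shm_mem)
  qed
qed

definition dabs :: "('f \<Rightarrow> nat) \<Rightarrow> ('f,'v) rule set \<Rightarrow> ('f,'v) state \<Rightarrow> 'f \<Rightarrow> pos \<Rightarrow> ('f,'v) state" where
  "dabs ar R G f x =
     {(reduce ar MO f x, ma) | MO ma. (MO,ma) \<in> G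
        \<and> (\<exists>l' ts. (l', x) \<in> MO \<and> l' = Fun f ts) \<and> reduce ar MO f x \<noteq> {}}
   \<union> {(MO,ma). (MO,ma) \<in> G \<and> x \<notin> snd ` MO}
   \<union> {({(l, x @ [i])}, (l, x @ [i])) | l i. l \<in> lhss R \<and> 1 \<le> i \<and> i \<le> ar f}"

lemma opos_shm: "(p @ q \<in> snd ` shm p mo) \<longleftrightarrow> q \<in> snd ` mo"
proof -
  have "snd ` shm p mo = (\<lambda>x. p @ snd x) ` mo" unfolding shm_def by (simp add: image_image case_prod_beta)
  then show ?thesis by auto
qed

lemma agoals_deriv: "agoals (deriv ar R L s f) p = dabs ar R (agoals s p) f (p @ L s)"
proof (rule set_eqI)
  fix G
  show "G \<in> agoals (deriv ar R L s f) p \<longleftrightarrow> G \<in> dabs ar R (agoals s p) f (p @ L s)"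
  proof (cases G)
    case (fields MO l Y)
    then have G: "G = (MO,(l,Y))" by simp
    show ?thesis
  proof
    assume "G \<in> agoals (deriv ar R L s f) p"
    then obtain mo a where g: "(mo,(l,a)) \<in> deriv ar R L s f" "MO = shm p mo" "Y = p @ a"
      using G by (auto simp: agoals_mem)
    from g(1) consider
        (r) mo0 where "(mo0,(l,a)) \<in> s" "\<exists>l' ts. (l', L s) \<in> mo0 \<and> l' = Fun f ts" "reduce ar mo0 f (L s) \<noteq> {}" "mo = reduce ar mo0 f (L s)"
      | (k) "(mo,(l,a)) \<in> s" "L s \<notin> opos mo"
      | (n) i where "l \<in> lhss R" "1 \<le> i" "i \<le> ar f" "mo = {(l, L s @ [i])}" "a = L s @ [i]"
      unfolding deriv_def by blast
    then show "G \<in> dabs ar R (agoals s p) f (p @ L s)"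
    proof cases
      case r
      have "(shm p mo0, (l, p @ a)) \<in> agoals s p" using r by (auto simp: agoals_mem)
      moreover have "\<exists>l' ts. (l', p @ L s) \<in> shm p mo0 \<and> l' = Fun f ts" using r(2) by (auto simp: shm_mem)
      moreover have "reduce ar (shm p mo0) f (p @ L s) \<noteq> {}" using r(3) reduce_shm[of p ar mo0 f "L s"] by auto
      moreover have "MO = reduce ar (shm p mo0) f (p @ L s)" using g r reduce_shm by metis
      ultimately show ?thesis unfolding dabs_def G g(3) by blast
    next
      case k
      have "(shm p mo, (l, p @ a)) \<in> agoals s p" using k by (auto simp: agoals_mem)
      moreover have "p @ L s \<notin> snd ` shm p mo" using k(2) opos_shm[of p "L s" mo] by (simp add: opos_def)
      ultimately show ?thesis unfolding dabs_def G g(2,3) by blast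
    next
      case n
      then show ?thesis unfolding dabs_def G g(2,3) by auto
    qed
  next
    assume "G \<in> dabs ar R (agoals s p) f (p @ L s)"
    then consider
        (r) MO0 where "(MO0,(l,Y)) \<in> agoals s p" "\<exists>l' ts. (l', p @ L s) \<in> MO0 \<and> l' = Fun f ts" "reduce ar MO0 f (p @ L s) \<noteq> {}" "MO = reduce ar MO0 f (p @ L s)"
      | (k) "(MO,(l,Y)) \<in> agoals s p" "p @ L s \<notin> snd ` MO"
      | (n) i where "l \<in> lhss R" "1 \<le> i" "i \<le> ar f" "MO = {(l, p @ L s @ [i])}" "Y = p @ L s @ [i]"
      unfolding dabs_def G by auto
    then show "G \<in> agoals (deriv ar R L s f) p"
    proof cases
      case r
      then obtain mo0 a where m: "(mo0,(l,a)) \<in> s" "MO0 = shm p mo0" "Y = p @ a" by (auto simp: agoals_mem)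
      have "\<exists>l' ts. (l', L s) \<in> mo0 \<and> l' = Fun f ts" using r(2) m(2) by (auto simp: shm_mem)
      moreover have "reduce ar mo0 f (L s) \<noteq> {}" using r(3) m(2) by (metis reduce_shm shm_empty)
      ultimately have "(reduce ar mo0 f (L s), (l,a)) \<in> deriv ar R L s f" using m(1) unfolding deriv_def by blast
      moreover have "MO = shm p (reduce ar mo0 f (L s))" using r(4) m(2) reduce_shm by metis
      ultimately show ?thesis unfolding G using m(3) by (auto simp: agoals_mem)
    next
      case k
      then obtain mo a where m: "(mo,(l,a)) \<in> s" "MO = shm p mo" "Y = p @ a" by (auto simp: agoals_mem)
      have "L s \<notin> opos mo" using k(2) m(2) opos_shm[of p "L s" mo] by (simp add: opos_def)
      then have "(mo,(l,a)) \<in> deriv ar R L s f" using m(1) unfolding deriv_def by blast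
      then show ?thesis unfolding G using m by (auto simp: agoals_mem)
    next
      case n
      then have "({(l, L s @ [i])}, (l, L s @ [i])) \<in> deriv ar R L s f" unfolding deriv_def by blast
      then show ?thesis unfolding G using n by (force simp: agoals_mem)
    qed
  qed
  qed
qed

section \<open>State invariants\<close>

definition lhs_fun :: "('f,'v) rule set \<Rightarrow> bool" where
  "lhs_fun R \<longleftrightarrow> (\<forall>l\<in>lhss R. tsym l \<noteq> None)"

lemma class_props:
  assumes "K \<in> dep_classes D"
  shows "K \<subseteq> D" "K \<noteq> {}"
    "\<And>g g'. g \<in> K \<Longrightarrow> g' \<in> D \<Longrightarrow> opos (fst g) \<inter> opos (fst g') \<noteq> {} \<Longrightarrow> g' \<in> K"
proof -
  from assms obtain g0 where g0: "g0 \<in> D" "K = {g'. (g0,g') \<in> (dep_edge D)\<^sup>*}" unfolding dep_classes_def by blast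
  show "K \<subseteq> D"
  proof
    fix g assume "g \<in> K"
    then have "(g0,g) \<in> (dep_edge D)\<^sup>*" using g0 by simp
    then show "g \<in> D" using g0(1) by (induction rule: rtrancl_induct) (auto simp: dep_edge_def)
  qed
  have "g0 \<in> K" using g0 by simp
  then show "K \<noteq> {}" by blast
  fix g g' assume "g \<in> K" "g' \<in> D" "opos (fst g) \<inter> opos (fst g') \<noteq> {}"
  moreover have "g \<in> D" using \<open>g \<in> K\<close> \<open>K \<subseteq> D\<close> by blast
  ultimately have "(g, g') \<in> dep_edge D" unfolding dep_edge_def by blast
  with \<open>g \<in> K\<close> g0 show "g' \<in> K" by (auto intro: rtrancl_into_rtrancl)
qed

lemma class_of: "g \<in> D \<Longrightarrow> \<exists>K\<in>dep_classes D. g \<in> K"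
  unfolding dep_classes_def by blast

lemma finite_dep_classes: "finite D \<Longrightarrow> finite (dep_classes D)"
proof -
  assume "finite D"
  moreover have "dep_classes D \<subseteq> Pow D" using class_props(1) by blast
  ultimately show ?thesis by (meson finite_Pow_iff finite_subset)
qed

lemma finite_lhss: "finite R \<Longrightarrow> finite (lhss R)"
  by (simp add: lhss_def)

lemma dabs_finite:
  assumes "finite G" "finite R"
  shows "finite (dabs ar R G f x)"
proof -
  have "{(reduce ar MO f x, ma) | MO ma. (MO,ma) \<in> G \<and> (\<exists>l' ts. (l', x) \<in> MO \<and> l' = Fun f ts) \<and> reduce ar MO f x \<noteq> {}}
        \<subseteq> (\<lambda>(MO,ma). (reduce ar MO f x, ma)) ` G" by auto
  then have 1: "finite {(reduce ar MO f x, ma) | MO ma. (MO,ma) \<in> G \<and> (\<exists>l' ts. (l', x) \<in> MO \<and> l' = Fun f ts) \<and> reduce ar MO f x \<noteq> {}}"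
    using assms(1) finite_subset by blast
  have 2: "finite {(MO,ma). (MO,ma) \<in> G \<and> x \<notin> snd ` MO}"
    using assms(1) by (rule finite_subset[rotated]) auto
  have "{({(l, x @ [i])}, (l, x @ [i])) | l i. l \<in> lhss R \<and> 1 \<le> i \<and> i \<le> ar f}
        \<subseteq> (\<lambda>(l,i). ({(l, x @ [i])}, (l, x @ [i]))) ` (lhss R \<times> {..ar f})" by auto
  then have 3: "finite {({(l, x @ [i])}, (l, x @ [i])) | l i. l \<in> lhss R \<and> 1 \<le> i \<and> i \<le> ar f}"
    using finite_lhss[OF assms(2)] finite_subset by blast
  show ?thesis unfolding dabs_def using 1 2 3 by blast
qed

lemma freshD: "fresh R s \<Longrightarrow> (mo,ma) \<in> s \<Longrightarrow> (l',z) \<in> mo \<Longrightarrow> l0 \<in> lhss R \<Longrightarrow> ({(l0,z)},(l0,z)) \<in> s"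
  unfolding fresh_def by blast

lemma dabs_no_x: "(MO, ma) \<in> dabs ar R G f x \<Longrightarrow> (l', x) \<notin> MO"
proof
  assume a: "(MO, ma) \<in> dabs ar R G f x" "(l', x) \<in> MO"
  from a(1) consider
      (r) MO0 where "MO = reduce ar MO0 f x"
    | (k) "x \<notin> snd ` MO"
    | (n) l i where "MO = {(l, x @ [i])}"
    unfolding dabs_def by blast
  then show False
  proof cases
    case r then show ?thesis using a(2) unfolding reduce_def by auto
  next
    case k then show ?thesis using a(2) by force
  next
    case n then show ?thesis using a(2) by auto
  qed
qed

lemma SI_dabs:
  assumes "SI R G" "finite R" "lhs_fun R"
  shows "SI R (dabs ar R G f x)"
proof -
  have wf: "wfgoals R G" and fr: "fresh R G" and fin: "finite G" using assms(1) unfolding SI_def by blast+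
  have "wfgoals R (dabs ar R G f x)"
    unfolding wfgoals_def
  proof (intro allI impI)
    fix MO l Y assume "(MO, (l, Y)) \<in> dabs ar R G f x"
    then consider
        (r) MO0 where "(MO0,(l,Y)) \<in> G" "reduce ar MO0 f x \<noteq> {}" "MO = reduce ar MO0 f x"
      | (k) "(MO,(l,Y)) \<in> G"
      | (n) i where "l \<in> lhss R" "MO = {(l, x @ [i])}" "Y = x @ [i]"
      unfolding dabs_def by blast
    then show "l \<in> lhss R \<and> MO \<noteq> {} \<and> (\<forall>l' z. (l', z) \<in> MO \<longrightarrow> (\<exists>w. z = Y @ w \<and> nonvar l w \<and> subt l w = l'))"
    proof cases
      case r
      have wf0: "l \<in> lhss R" "\<And>l' z. (l', z) \<in> MO0 \<Longrightarrow> \<exists>w. z = Y @ w \<and> nonvar l w \<and> subt l w = l'"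
        using wf r(1) unfolding wfgoals_def by blast+
      have "\<exists>w. z = Y @ w \<and> nonvar l w \<and> subt l w = l'" if "(l', z) \<in> MO" for l' z
      proof -
        from that r(3) consider "(l', z) \<in> MO0" | l0 i where "(l0, x) \<in> MO0" "in_poss [i] l0" "\<forall>v. subt l0 [i] \<noteq> Var v" "l' = subt l0 [i]" "z = x @ [i]"
          unfolding reduce_def by blast
        then show ?thesis
        proof cases
          case 1 then show ?thesis using wf0 by blast
        next
          case 2
          from wf0(2)[OF 2(1)] obtain w where w: "x = Y @ w" "nonvar l w" "subt l w = l0" by blast
          have "in_poss (w @ [i]) l" using w 2(2) by (auto simp: nonvar_def in_poss_append)
          moreover have "subt l (w @ [i]) = l'" using w 2 by (simp add: subt_append)
          moreover have "tsym l' \<noteq> None" using 2(3,4) by (cases "subt l0 [i]") auto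
          ultimately show ?thesis using w 2 by (intro exI[of _ "w @ [i]"]) (simp add: nonvar_def)
        qed
      qed
      moreover have "MO \<noteq> {}" using r(2,3) by simp
      ultimately show ?thesis using wf0(1) by blast
    next
      case k then show ?thesis using wf unfolding wfgoals_def by blast
    next
      case n
      have "tsym l \<noteq> None" using n(1) assms(3) unfolding lhs_fun_def by blast
      then show ?thesis using n by (simp add: nonvar_def)
    qed
  qed
  moreover have "fresh R (dabs ar R G f x)"
    unfolding fresh_def
  proof (intro allI impI)
    fix MO ma l' z l0 assume a: "(MO, ma) \<in> dabs ar R G f x" "(l', z) \<in> MO" "l0 \<in> lhss R"
    show "({(l0, z)}, l0, z) \<in> dabs ar R G f x"
    proof (cases "z = x")
      case False
      have "(\<exists>MO0 ma0 l''. (MO0,ma0) \<in> G \<and> (l'',z) \<in> MO0) \<or> (\<exists>i. 1 \<le> i \<and> i \<le> ar f \<and> z = x @ [i])"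
      proof -
        from a(1) consider
            (r) MO0 ma0 where "(MO0,ma0) \<in> G" "MO = reduce ar MO0 f x"
          | (k) "(MO,ma) \<in> G"
          | (n) l i where "1 \<le> i" "i \<le> ar f" "MO = {(l, x @ [i])}"
          unfolding dabs_def by blast
        then show ?thesis
        proof cases
          case r
          from a(2) r(2) have "(l',z) \<in> MO0 \<or> (\<exists>i. 1 \<le> i \<and> i \<le> ar f \<and> z = x @ [i])"
            unfolding reduce_def by blast
          then show ?thesis using r(1) by blast
        next
          case k then show ?thesis using a(2) by blast
        next
          case n then show ?thesis using a(2) by blast
        qed
      qed
      then show ?thesis
      proof (elim exE disjE conjE)
        fix MO0 ma0 l'' assume "(MO0,ma0) \<in> G" "(l'',z) \<in> MO0"
        then have "({(l0, z)}, l0, z) \<in> G" using freshD[OF fr _ _ a(3)] by blast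
        moreover have "x \<notin> snd ` {(l0,z)}" using False by auto
        ultimately show ?thesis unfolding dabs_def by (intro UnI1 UnI2) simp
      next
        fix i assume "1 \<le> i" "i \<le> ar f" "z = x @ [i]"
        then show ?thesis using a(3) unfolding dabs_def by (intro UnI2) blast
      qed
    next
      case True
      then show ?thesis using dabs_no_x[OF a(1)] a(2) by simp
    qed
  qed
  moreover have "finite (dabs ar R G f x)" by (rule dabs_finite[OF fin assms(2)])
  ultimately show ?thesis by (simp add: SI_def)
qed


lemma SI_deriv:
  assumes "SI R s" "finite R" "lhs_fun R"
  shows "SI R (deriv ar R L s f)"
  using SI_dabs[OF assms, of ar f "L s"] agoals_deriv[of ar R L s f "[]"] SI_agoals[of R _ "[]"]
  by simp

lemma SI_class:
  assumes "SI R D" "K \<in> dep_classes D" "finite R"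
  shows "SI R K"
proof -
  have sub: "K \<subseteq> D" using class_props(1)[OF assms(2)] .
  have "finite K" using assms(1) sub finite_subset unfolding SI_def by blast
  moreover have "wfgoals R K" using assms(1) sub unfolding SI_def wfgoals_def by blast
  moreover have "fresh R K"
    unfolding fresh_def
  proof (intro allI impI)
    fix mo ma l' z l0 assume a: "(mo, ma) \<in> K" "(l', z) \<in> mo" "l0 \<in> lhss R"
    have "({(l0,z)},(l0,z)) \<in> D" using assms(1) a sub unfolding SI_def fresh_def by blast
    moreover have "opos (fst (mo,ma)) \<inter> opos (fst ({(l0,z)},(l0,z))) \<noteq> {}" using a(2)
      by (auto simp: opos_def image_iff) (metis snd_conv)
    ultimately show "({(l0,z)},(l0,z)) \<in> K" using class_props(3)[OF assms(2) a(1)] by blast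
  qed
  ultimately show ?thesis by (simp add: SI_def)
qed

lemma delta_child:
  assumes "SI R s" "finite R" "lhs_fun R" "(s', p') \<in> delta ar R L s f"
  shows "\<exists>K\<in>dep_classes (deriv ar R L s f). s' = lift K \<and> p' = gcp (ann_pos K) \<and> agoals s' p' = K \<and> SI R K \<and> SI R s'"
proof -
  obtain K where K: "K \<in> dep_classes (deriv ar R L s f)" "s' = lift K" "p' = gcp (ann_pos K)"
    using assms(4) unfolding delta_def by blast
  have SK: "SI R K" using SI_class[OF SI_deriv[OF assms(1-3)] K(1) assms(2)] .
  have "wfgoals R K" using SK by (simp add: SI_def)
  then have "agoals s' p' = K" using lift_agoals[OF class_props(2)[OF K(1)]] K(2,3) by blast
  moreover then have "SI R s'" using SK SI_agoals[of R s' p'] by simp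
  ultimately show ?thesis using K SK by blast
qed

lemma s0_mem: "g \<in> s0 R \<longleftrightarrow> (\<exists>l. l \<in> lhss R \<and> g = ({(l,[])}, (l,[])))"
  unfolding s0_def by blast

lemma SI_s0:
  assumes "finite R" "lhs_fun R"
  shows "SI R (s0 R)"
proof -
  have "s0 R = (\<lambda>l. ({(l,[])}, (l,[]))) ` lhss R" unfolding s0_def by blast
  then have "finite (s0 R)" using finite_lhss[OF assms(1)] by simp
  moreover have "wfgoals R (s0 R)"
    unfolding wfgoals_def
  proof (intro allI impI)
    fix mo l a assume "(mo, l, a) \<in> s0 R"
    then have g: "l \<in> lhss R" "mo = {(l,[])}" "a = []" unfolding s0_mem by auto
    have "tsym l \<noteq> None" using assms(2) g(1) unfolding lhs_fun_def by blast
    then have "nonvar l []" by (simp add: nonvar_def)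
    then show "l \<in> lhss R \<and> mo \<noteq> {} \<and> (\<forall>l' z. (l', z) \<in> mo \<longrightarrow> (\<exists>w. z = a @ w \<and> nonvar l w \<and> subt l w = l'))"
      using g by auto
  qed
  moreover have "fresh R (s0 R)"
    unfolding fresh_def
  proof (intro allI impI)
    fix mo ma l' z l0 assume a: "(mo, ma) \<in> s0 R" "(l', z) \<in> mo" "l0 \<in> lhss R"
    then obtain l where "mo = {(l,[])}" unfolding s0_mem by auto
    with a have "z = []" by simp
    then show "({(l0, z)}, l0, z) \<in> s0 R" using a(3) unfolding s0_mem by blast
  qed
  ultimately show ?thesis by (simp add: SI_def)
qed

lemma reach_SI:
  assumes "s \<in> reach F ar R L" "finite R" "lhs_fun R"
  shows "SI R s"
  using assms(1)
proof induction
  case init then show ?case using SI_s0[OF assms(2,3)] .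
next
  case (step s f s' p')
  from delta_child[OF step.IH assms(2,3) step.hyps(3)] show ?case by blast
qed

lemma finite_delta: "SI R s \<Longrightarrow> finite R \<Longrightarrow> lhs_fun R \<Longrightarrow> finite (delta ar R L s f)"
proof -
  assume a: "SI R s" "finite R" "lhs_fun R"
  have "finite (deriv ar R L s f)" using SI_deriv[OF a] by (simp add: SI_def)
  then have "finite (dep_classes (deriv ar R L s f))" by (rule finite_dep_classes)
  then show ?thesis unfolding delta_def by (simp add: setcompr_eq_image)
qed

section \<open>Context and vertex invariant\<close>

definition ctx :: "'f set \<Rightarrow> ('f \<Rightarrow> nat) \<Rightarrow> ('f,'v) rule set \<Rightarrow> (('f,'v) state \<Rightarrow> pos) \<Rightarrow> bool" where
  "ctx F ar R L \<longleftrightarrow> trs F ar R \<and> left_linear R \<and> valid_label F ar R L"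

lemma ctx_finite: "ctx F ar R L \<Longrightarrow> finite R"
  by (simp add: ctx_def trs_def)

lemma ctx_lhs_fun: "ctx F ar R L \<Longrightarrow> lhs_fun R"
proof -
  assume c: "ctx F ar R L"
  show ?thesis unfolding lhs_fun_def
  proof
    fix l assume "l \<in> lhss R"
    then obtain r where "(l,r) \<in> R" by (auto simp: lhss_def)
    with c have "\<forall>x. l \<noteq> Var x" by (auto simp: ctx_def trs_def)
    then show "tsym l \<noteq> None" by (cases l) auto
  qed
qed

lemma ctx_lhs_wf: "ctx F ar R L \<Longrightarrow> l \<in> lhss R \<Longrightarrow> wf_term F ar l"
  by (auto simp: ctx_def trs_def lhss_def)

lemma ctx_rule: "ctx F ar R L \<Longrightarrow> (l,r) \<in> R \<Longrightarrow> wf_term F ar l \<and> wf_term F ar r \<and> vars r \<subseteq> vars l \<and> linear l"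
  by (auto simp: ctx_def trs_def left_linear_def)

lemma ctx_SI: "ctx F ar R L \<Longrightarrow> s \<in> reach F ar R L \<Longrightarrow> SI R s"
  using reach_SI ctx_finite ctx_lhs_fun by blast

lemma ctx_label: "ctx F ar R L \<Longrightarrow> s \<in> reach F ar R L \<Longrightarrow> p @ L s \<in> obpos (agoals s p)"
proof -
  assume c: "ctx F ar R L" "s \<in> reach F ar R L"
  then obtain mo l where g: "(mo,(l,[])) \<in> s" "L s \<in> opos mo" unfolding ctx_def valid_label_def by blast
  then obtain l' where "(l', L s) \<in> mo" by (auto simp: opos_def)
  then have "(l', p @ L s) \<in> shm p mo" by (auto simp: shm_mem)
  moreover have "(shm p mo, (l, p @ [])) \<in> agoals s p" using g(1) by (auto simp: agoals_mem)
  ultimately show ?thesis unfolding obpos_def by blast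
qed

definition vinv :: "'f set \<Rightarrow> ('f \<Rightarrow> nat) \<Rightarrow> ('f,'v) rule set \<Rightarrow> (('f,'v) state \<Rightarrow> pos)
   \<Rightarrow> ('f,'v) term \<Rightarrow> ('f,'v) state \<Rightarrow> pos \<Rightarrow> pos set \<Rightarrow> bool" where
  "vinv F ar R L t s p h \<longleftrightarrow> s \<in> reach F ar R L
   \<and> (\<forall>y\<in>h. in_poss y t \<and> (y \<noteq> [] \<longrightarrow> butlast y \<in> h))
   \<and> (\<forall>z\<in>obpos (agoals s p). z \<notin> h \<and> in_poss z t \<and> (z \<noteq> [] \<longrightarrow> butlast z \<in> h))
   \<and> (\<forall>MO l Y. (MO,(l,Y)) \<in> agoals s p \<longrightarrow> (\<forall>w. nonvar l w \<longrightarrow>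
         (\<exists>l' z. (l',z) \<in> MO \<and> prefix z (Y @ w)) \<or> (Y @ w \<in> h \<and> tsym (subt t (Y @ w)) = tsym (subt l w))))
   \<and> (\<forall>z\<in>obpos (agoals s p). \<forall>l\<in>lhss R. \<forall>y w. z = y @ w \<and> w \<noteq> [] \<and> nonvar l w
         \<and> (\<forall>w'. nonvar l w' \<and> y @ w' \<in> h \<longrightarrow> tsym (subt t (y @ w')) = tsym (subt l w'))
         \<longrightarrow> (\<exists>MO. (MO,(l,y)) \<in> agoals s p \<and> (\<exists>l'. (l',z) \<in> MO)))"

lemma vinvD:
  assumes "vinv F ar R L t s p h"
  shows vinv_reach: "s \<in> reach F ar R L"
    and vinv_h: "\<And>y. y \<in> h \<Longrightarrow> in_poss y t \<and> (y \<noteq> [] \<longrightarrow> butlast y \<in> h)"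
    and vinv_ob: "\<And>z. z \<in> obpos (agoals s p) \<Longrightarrow> z \<notin> h \<and> in_poss z t \<and> (z \<noteq> [] \<longrightarrow> butlast z \<in> h)"
    and vinv_cons: "\<And>MO l Y w. (MO,(l,Y)) \<in> agoals s p \<Longrightarrow> nonvar l w \<Longrightarrow>
         (\<exists>l' z. (l',z) \<in> MO \<and> prefix z (Y @ w)) \<or> (Y @ w \<in> h \<and> tsym (subt t (Y @ w)) = tsym (subt l w))"
    and vinv_comp: "\<And>z l y w. z \<in> obpos (agoals s p) \<Longrightarrow> l \<in> lhss R \<Longrightarrow> z = y @ w \<Longrightarrow> w \<noteq> [] \<Longrightarrow> nonvar l w \<Longrightarrow>
         (\<And>w'. nonvar l w' \<Longrightarrow> y @ w' \<in> h \<Longrightarrow> tsym (subt t (y @ w')) = tsym (subt l w'))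
         \<Longrightarrow> (\<exists>MO. (MO,(l,y)) \<in> agoals s p \<and> (\<exists>l'. (l',z) \<in> MO))"
  using assms unfolding vinv_def by blast+

definition prec :: "(('f,'v) state \<times> pos) \<Rightarrow> (('f,'v) state \<times> pos) \<Rightarrow> bool" where
  "prec c c' \<longleftrightarrow> (\<forall>z\<in>obpos (agoals (fst c') (snd c')). \<exists>z'\<in>obpos (agoals (fst c) (snd c)). prefix z' z)
     \<and> (\<forall>MO l y. (MO,(l,y)) \<in> agoals (fst c') (snd c') \<longrightarrow>
          (\<exists>MO'. (MO',(l,y)) \<in> agoals (fst c) (snd c)) \<or> (\<exists>z\<in>obpos (agoals (fst c) (snd c)). strict_prefix z y))"

lemma prec_refl: "prec c c"
  unfolding prec_def by blast

lemma prec_trans: "prec c1 c2 \<Longrightarrow> prec c2 c3 \<Longrightarrow> prec c1 c3"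
proof -
  assume a: "prec c1 c2" "prec c2 c3"
  show ?thesis unfolding prec_def
  proof (intro conjI ballI allI impI)
    fix z assume "z \<in> obpos (agoals (fst c3) (snd c3))"
    then obtain z' where "z' \<in> obpos (agoals (fst c2) (snd c2))" "prefix z' z" using a(2) unfolding prec_def by blast
    moreover obtain z'' where "z'' \<in> obpos (agoals (fst c1) (snd c1))" "prefix z'' z'"
      using a(1) calculation(1) unfolding prec_def by blast
    ultimately show "\<exists>z'\<in>obpos (agoals (fst c1) (snd c1)). prefix z' z" using prefix_order.trans by blast
  next
    fix MO l y assume "(MO, l, y) \<in> agoals (fst c3) (snd c3)"
    then have "(\<exists>MO'. (MO',(l,y)) \<in> agoals (fst c2) (snd c2)) \<or> (\<exists>z\<in>obpos (agoals (fst c2) (snd c2)). strict_prefix z y)"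
      using a(2) unfolding prec_def by blast
    then show "(\<exists>MO'. (MO',(l,y)) \<in> agoals (fst c1) (snd c1)) \<or> (\<exists>z\<in>obpos (agoals (fst c1) (snd c1)). strict_prefix z y)"
    proof
      assume "\<exists>MO'. (MO',(l,y)) \<in> agoals (fst c2) (snd c2)"
      then obtain MO' where "(MO',(l,y)) \<in> agoals (fst c2) (snd c2)" by blast
      then show ?thesis using a(1) unfolding prec_def by blast
    next
      assume "\<exists>z\<in>obpos (agoals (fst c2) (snd c2)). strict_prefix z y"
      then obtain z where z: "z \<in> obpos (agoals (fst c2) (snd c2))" "strict_prefix z y" by blast
      then obtain z' where "z' \<in> obpos (agoals (fst c1) (snd c1))" "prefix z' z" using a(1) unfolding prec_def by blast
      with z show ?thesis by (meson prefix_order.le_less_trans)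
    qed
  qed
qed

lemma obpos_dabs:
  "z \<in> obpos (dabs ar R G f x) \<Longrightarrow> (z \<in> obpos G \<and> z \<noteq> x) \<or> (\<exists>i. 1 \<le> i \<and> i \<le> ar f \<and> z = x @ [i])"
proof -
  assume "z \<in> obpos (dabs ar R G f x)"
  then obtain MO ma l' where a: "(MO,ma) \<in> dabs ar R G f x" "(l',z) \<in> MO" unfolding obpos_def by blast
  have zx: "z \<noteq> x" using dabs_no_x[OF a(1)] a(2) by blast
  from a(1) consider
      (r) MO0 ma0 where "(MO0,ma0) \<in> G" "MO = reduce ar MO0 f x"
    | (k) "(MO,ma) \<in> G"
    | (n) l i where "1 \<le> i" "i \<le> ar f" "MO = {(l, x @ [i])}"
    unfolding dabs_def by blast
  then show ?thesis
  proof cases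
    case r
    from a(2) r(2) have "(l',z) \<in> MO0 \<or> (\<exists>i. 1 \<le> i \<and> i \<le> ar f \<and> z = x @ [i])"
      unfolding reduce_def by blast
    then show ?thesis
    proof
      assume "(l',z) \<in> MO0" then have "z \<in> obpos G" using r(1) unfolding obpos_def by blast
      then show ?thesis using zx by blast
    qed blast
  next
    case k then have "z \<in> obpos G" using a(2) unfolding obpos_def by blast
    then show ?thesis using zx by blast
  next
    case n then show ?thesis using a(2) by blast
  qed
qed

lemma ann_dabs:
  "(MO,(l,y)) \<in> dabs ar R G f x \<Longrightarrow> (\<exists>MO'. (MO',(l,y)) \<in> G) \<or> (\<exists>i. 1 \<le> i \<and> i \<le> ar f \<and> y = x @ [i])"
  unfolding dabs_def by blast

lemma obposI: "(MO,ma) \<in> G \<Longrightarrow> (l',z) \<in> MO \<Longrightarrow> z \<in> obpos G"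
  unfolding obpos_def by blast

lemma obpos_mono: "G \<subseteq> G' \<Longrightarrow> obpos G \<subseteq> obpos G'"
  unfolding obpos_def by blast

lemma class_abs:
  assumes "K \<in> dep_classes D"
  shows "agoals K p \<subseteq> agoals D p"
    and "\<And>g g' z l1 l2. g \<in> agoals K p \<Longrightarrow> g' \<in> agoals D p \<Longrightarrow> (l1,z) \<in> fst g \<Longrightarrow> (l2,z) \<in> fst g' \<Longrightarrow> g' \<in> agoals K p"
proof -
  show "agoals K p \<subseteq> agoals D p" using class_props(1)[OF assms] unfolding agoals_def by blast
  fix g g' z l1 l2 assume a: "g \<in> agoals K p" "g' \<in> agoals D p" "(l1,z) \<in> fst g" "(l2,z) \<in> fst g'"
  obtain g0 where g0: "g0 \<in> K" "g = shg p g0" using a(1) unfolding agoals_def by blast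
  obtain g0' where g0': "g0' \<in> D" "g' = shg p g0'" using a(2) unfolding agoals_def by blast
  have "(l1,z) \<in> shm p (fst g0)" using a(3) g0(2) by (simp add: shg_def)
  then obtain z1 where z1: "z = p @ z1" "(l1,z1) \<in> fst g0" by (auto simp: shm_mem)
  have "(l2,z) \<in> shm p (fst g0')" using a(4) g0'(2) by (simp add: shg_def)
  then obtain z2 where z2: "z = p @ z2" "(l2,z2) \<in> fst g0'" by (auto simp: shm_mem)
  have "z1 = z2" using z1 z2 by simp
  then have "z1 \<in> opos (fst g0) \<inter> opos (fst g0')" using z1 z2 by (force simp: opos_def)
  then have "g0' \<in> K" using class_props(3)[OF assms g0(1) g0'(1)] by blast
  then show "g' \<in> agoals K p" using g0' unfolding agoals_def by blast
qed

lemma child_exists: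
  assumes "SI R s" "finite R" "lhs_fun R" "g \<in> dabs ar R (agoals s p) f (p @ L s)"
  shows "\<exists>s' p'. (s',p') \<in> delta ar R L s f \<and> g \<in> agoals s' (p @ p')"
proof -
  have "g \<in> agoals (deriv ar R L s f) p" using assms(4) agoals_deriv by metis
  then obtain g0 where g0: "g0 \<in> deriv ar R L s f" "g = shg p g0" unfolding agoals_def by blast
  obtain K where K: "K \<in> dep_classes (deriv ar R L s f)" "g0 \<in> K" using class_of[OF g0(1)] by blast
  have d: "(lift K, gcp (ann_pos K)) \<in> delta ar R L s f" using K(1) unfolding delta_def by blast
  have "SI R K" using SI_class[OF SI_deriv[OF assms(1-3)] K(1) assms(2)] .
  then have "agoals (lift K) (gcp (ann_pos K)) = K"
    using lift_agoals[OF class_props(2)[OF K(1)], of R] by (simp add: SI_def)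
  then have "agoals (lift K) (p @ gcp (ann_pos K)) = agoals K p" by (simp add: agoals_append)
  then have "g \<in> agoals (lift K) (p @ gcp (ann_pos K))" using K(2) g0(2) unfolding agoals_def by auto
  then show ?thesis using d by blast
qed

lemma wfgoals_uniq:
  assumes "wfgoals R G" "(MO,(l,Y)) \<in> G" "(l1,z) \<in> MO" "z = Y @ w"
  shows "nonvar l w \<and> subt l w = l1"
proof -
  obtain w1 where "z = Y @ w1" "nonvar l w1" "subt l w1 = l1" using assms(1-3) unfolding wfgoals_def by blast
  moreover then have "w1 = w" using assms(4) by simp
  ultimately show ?thesis by simp
qed

lemma prefix_append_cases:
  assumes "prefix x (y @ w)" "x = y @ wx"
  shows "\<exists>r. w = wx @ r"
  using assms by (auto simp: prefix_def)

lemma vinv_child: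
  assumes c: "ctx F ar R L" and wft: "wf_term F ar t" and gr: "ground t"
    and vi: "vinv F ar R L t s p h"
    and d: "(s',p') \<in> delta ar R L s (hd_sym (subt t (p @ L s)))"
  shows "vinv F ar R L t s' (p @ p') (insert (p @ L s) h) \<and> prec (s,p) (s', p @ p')"
proof -
  define x where "x = p @ L s"
  define G where "G = agoals s p"
  define f where "f = hd_sym (subt t x)"
  define h' where "h' = insert x h"
  define D where "D = dabs ar R G f x"
  have rs: "s \<in> reach F ar R L" using vinv_reach[OF vi] .
  have SIs: "SI R s" using ctx_SI[OF c rs] .
  have wfG: "wfgoals R G" and frG: "fresh R G" using SIs SI_agoals[of R s p] unfolding G_def SI_def by auto
  have xG: "x \<in> obpos G" unfolding x_def G_def using ctx_label[OF c rs] .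
  have xh: "x \<notin> h" and xin: "in_poss x t" and xbl: "x \<noteq> [] \<Longrightarrow> butlast x \<in> h"
    using vinv_ob[OF vi] xG unfolding G_def by blast+
  have "tsym (subt t x) \<noteq> None" using ground_subt_Fun[OF gr xin] .
  then obtain us where tx: "subt t x = Fun f us" unfolding f_def by (cases "subt t x") auto
  have symx: "tsym (subt t x) = Some f" using tx by simp
  have wfx: "wf_term F ar (Fun f us)" using wf_subt[OF wft xin] tx by simp
  then have fF: "f \<in> F" and lenus: "length us = ar f" by auto
  have fin: "finite R" and lf: "lhs_fun R" using ctx_finite[OF c] ctx_lhs_fun[OF c] by auto
  from delta_child[OF SIs fin lf, of s' p'] d obtain K where
    K: "K \<in> dep_classes (deriv ar R L s f)" "agoals s' p' = K"
    unfolding f_def x_def by blast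
  define G' where "G' = agoals s' (p @ p')"
  have G'K: "G' = agoals K p" unfolding G'_def using K(2) by (simp add: agoals_append)
  have DD: "agoals (deriv ar R L s f) p = D" unfolding D_def G_def x_def by (rule agoals_deriv)
  have G'D: "G' \<subseteq> D" using class_abs(1)[OF K(1), of p] G'K DD by simp
  have clos: "g' \<in> G'" if "g \<in> G'" "g' \<in> D" "(l1,z) \<in> fst g" "(l2,z) \<in> fst g'" for g g' l1 l2 z
    using class_abs(2)[OF K(1), of g p g' l1 z l2] that G'K DD by simp
  have rs': "s' \<in> reach F ar R L" using reach.step[OF rs fF] d unfolding f_def x_def by simp
  have wf_sub: "wf_term F ar (subt l w)" if "l \<in> lhss R" "nonvar l w" for l w
    using wf_subt[OF ctx_lhs_wf[OF c that(1)]] that(2) by (simp add: nonvar_def)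
  have V3: "\<forall>y\<in>h'. in_poss y t \<and> (y \<noteq> [] \<longrightarrow> butlast y \<in> h')"
    using vinv_h[OF vi] xin xbl unfolding h'_def by auto
  have V4: "\<forall>z\<in>obpos G'. z \<notin> h' \<and> in_poss z t \<and> (z \<noteq> [] \<longrightarrow> butlast z \<in> h')"
  proof
    fix z assume "z \<in> obpos G'"
    then have "z \<in> obpos D" using obpos_mono[OF G'D] by blast
    from obpos_dabs[OF this[unfolded D_def]] show "z \<notin> h' \<and> in_poss z t \<and> (z \<noteq> [] \<longrightarrow> butlast z \<in> h')"
    proof
      assume "z \<in> obpos G \<and> z \<noteq> x"
      then show ?thesis using vinv_ob[OF vi, of z] unfolding G_def h'_def by auto
    next
      assume "\<exists>i. 1 \<le> i \<and> i \<le> ar f \<and> z = x @ [i]"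
      then obtain i where i: "1 \<le> i" "i \<le> ar f" "z = x @ [i]" by blast
      have "z \<notin> h"
      proof
        assume "z \<in> h"
        then have "butlast z \<in> h" using vinv_h[OF vi, of z] i(3) by auto
        then show False using xh i(3) by simp
      qed
      moreover have "z \<noteq> x" using i(3) by simp
      moreover have "in_poss z t" using in_poss_child[OF wft xin symx i(1,2)] i(3) by simp
      ultimately show ?thesis using i(3) unfolding h'_def by simp
    qed
  qed
  have V5: "\<forall>MO l Y. (MO,(l,Y)) \<in> G' \<longrightarrow> (\<forall>w. nonvar l w \<longrightarrow>
         (\<exists>l' z. (l',z) \<in> MO \<and> prefix z (Y @ w)) \<or> (Y @ w \<in> h' \<and> tsym (subt t (Y @ w)) = tsym (subt l w)))"
  proof (intro allI impI)
    fix MO l Y w assume g: "(MO,(l,Y)) \<in> G'" and nv: "nonvar l w"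
    have "(MO,(l,Y)) \<in> D" using g G'D by blast
    then consider
        (r) MO0 where "(MO0,(l,Y)) \<in> G" "\<exists>l' ts. (l', x) \<in> MO0 \<and> l' = Fun f ts" "MO = reduce ar MO0 f x"
      | (k) "(MO,(l,Y)) \<in> G" "x \<notin> snd ` MO"
      | (n) i where "MO = {(l, x @ [i])}" "Y = x @ [i]"
      unfolding D_def dabs_def by blast
    then show "(\<exists>l' z. (l',z) \<in> MO \<and> prefix z (Y @ w)) \<or> (Y @ w \<in> h' \<and> tsym (subt t (Y @ w)) = tsym (subt l w))"
    proof cases
      case r
      from vinv_cons[OF vi r(1)[unfolded G_def] nv]
      show ?thesis
      proof
        assume "\<exists>l' z. (l',z) \<in> MO0 \<and> prefix z (Y @ w)"
        then obtain l' z where lz: "(l',z) \<in> MO0" "prefix z (Y @ w)" by blast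
        show ?thesis
        proof (cases "z = x")
          case False
          then have "(l',z) \<in> MO" using lz(1) r(3) unfolding reduce_def by blast
          then show ?thesis using lz(2) by blast
        next
          case True
          obtain wx where wx: "x = Y @ wx" using wfG r(1) lz(1) True unfolding wfgoals_def by blast
          have l'eq: "nonvar l wx \<and> subt l wx = l'" using wfgoals_uniq[OF wfG r(1) lz(1)] True wx by simp
          obtain ts where l0: "(Fun f ts, x) \<in> MO0" using r(2) by blast
          have "subt l wx = Fun f ts" using wfgoals_uniq[OF wfG r(1) l0 wx] by simp
          then have l'f: "l' = Fun f ts" using l'eq by simp
          obtain rr where w: "w = wx @ rr" using prefix_append_cases[OF lz(2)] True wx by blast
          show ?thesis
          proof (cases rr)
            case Nil
            then have "Y @ w = x" using w wx by simp
            moreover have "w = wx" using w Nil by simp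
            ultimately show ?thesis using symx l'eq l'f unfolding h'_def by simp
          next
            case (Cons i rr')
            have "nonvar l (wx @ [i])" using nonvar_prefix[OF nv] w Cons by simp
            then have ip: "in_poss [i] l'" and nvi: "tsym (subt l' [i]) \<noteq> None"
              using l'eq by (auto simp: nonvar_def in_poss_append subt_append)
            have "l \<in> lhss R" using wfG r(1) unfolding wfgoals_def by blast
            then have "wf_term F ar l'" using wf_sub l'eq by blast
            then have i: "1 \<le> i" "i \<le> ar f" using ip l'f by auto
            have "\<forall>v. subt l' [i] \<noteq> Var v" using nvi by auto
            then have "(subt l' [i], x @ [i]) \<in> MO"
              using r(3) lz(1) True ip i unfolding reduce_def by blast
            moreover have "prefix (x @ [i]) (Y @ w)" using w wx Cons by simp
            ultimately show ?thesis by blast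
          qed
        qed
      next
        assume "Y @ w \<in> h \<and> tsym (subt t (Y @ w)) = tsym (subt l w)"
        then show ?thesis unfolding h'_def by blast
      qed
    next
      case k
      from vinv_cons[OF vi k(1)[unfolded G_def] nv] show ?thesis unfolding h'_def by blast
    next
      case n
      then show ?thesis by auto
    qed
  qed
  have V6: "\<forall>z\<in>obpos G'. \<forall>l\<in>lhss R. \<forall>y w. z = y @ w \<and> w \<noteq> [] \<and> nonvar l w
         \<and> (\<forall>w'. nonvar l w' \<and> y @ w' \<in> h' \<longrightarrow> tsym (subt t (y @ w')) = tsym (subt l w'))
         \<longrightarrow> (\<exists>MO. (MO,(l,y)) \<in> G' \<and> (\<exists>l'. (l',z) \<in> MO))"
  proof (intro ballI allI impI, elim conjE)
    fix z l y w
    assume zG': "z \<in> obpos G'" and lR: "l \<in> lhss R" and zyw: "z = y @ w" and wne: "w \<noteq> []" and nv: "nonvar l w"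
      and cons: "\<forall>w'. nonvar l w' \<and> y @ w' \<in> h' \<longrightarrow> tsym (subt t (y @ w')) = tsym (subt l w')"
    obtain MOz maz lz where gz: "(MOz,maz) \<in> G'" "(lz,z) \<in> MOz" using zG' unfolding obpos_def by blast
    have consh: "\<And>w'. nonvar l w' \<Longrightarrow> y @ w' \<in> h \<Longrightarrow> tsym (subt t (y @ w')) = tsym (subt l w')"
      using cons unfolding h'_def by blast
    have "\<exists>MO l'. (MO,(l,y)) \<in> D \<and> (l',z) \<in> MO"
    proof -
      have zD: "z \<in> obpos D" using obpos_mono[OF G'D] zG' by blast
      from obpos_dabs[OF this[unfolded D_def]] show ?thesis
      proof
        assume zo: "z \<in> obpos G \<and> z \<noteq> x"
        from vinv_comp[OF vi zo[unfolded G_def, THEN conjunct1] lR zyw wne nv consh]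
        obtain MO l'' where g: "(MO,(l,y)) \<in> G" "(l'',z) \<in> MO" unfolding G_def by blast
        show ?thesis
        proof (cases "x \<in> snd ` MO")
          case False
          then have "(MO,(l,y)) \<in> D" using g(1) unfolding D_def dabs_def by (intro UnI1 UnI2) simp
          then show ?thesis using g(2) by blast
        next
          case True
          then obtain lx where lx: "(lx, x) \<in> MO" by force
          obtain wx where wx: "x = y @ wx" using wfG g(1) lx unfolding wfgoals_def by blast
          have lxe: "nonvar l wx \<and> subt l wx = lx" using wfgoals_uniq[OF wfG g(1) lx wx] .
          have "tsym (subt t (y @ wx)) = tsym (subt l wx)" using cons lxe wx unfolding h'_def by blast
          then have "tsym lx = Some f" using symx wx lxe by simp
          then obtain ts where lxf: "lx = Fun f ts" by (cases lx) auto
          have zr: "(l'',z) \<in> reduce ar MO f x" using g(2) zo unfolding reduce_def by blast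
          then have "reduce ar MO f x \<noteq> {}" by blast
          then have "(reduce ar MO f x, (l,y)) \<in> D" using g(1) lx lxf unfolding D_def dabs_def by blast
          then show ?thesis using zr by blast
        qed
      next
        assume "\<exists>i. 1 \<le> i \<and> i \<le> ar f \<and> z = x @ [i]"
        then obtain i where i: "1 \<le> i" "i \<le> ar f" "z = x @ [i]" by blast
        define w0 where "w0 = butlast w"
        have w: "w = w0 @ [i]" and yx: "y @ w0 = x"
        proof -
          have "w = butlast w @ [last w]" using wne by simp
          then have "y @ butlast w @ [last w] = x @ [i]" using zyw i(3) by metis
          then show "w = w0 @ [i]" "y @ w0 = x" unfolding w0_def using \<open>w = butlast w @ [last w]\<close>
            by (metis append_assoc butlast_snoc last_snoc)+
        qed
        have nvw0: "nonvar l w0" using nonvar_prefix[OF nv] w by simp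
        have consx: "tsym (subt t x) = tsym (subt l w0)" using cons nvw0 yx unfolding h'_def by blast
        have nvi: "in_poss [i] (subt l w0) \<and> tsym (subt (subt l w0) [i]) \<noteq> None"
          using nv w by (simp add: nonvar_def in_poss_append subt_append)
        obtain ts where lw0: "subt l w0 = Fun f ts" using consx symx by (cases "subt l w0") auto
        have nvar: "\<forall>v. subt (subt l w0) [i] \<noteq> Var v" using nvi by auto
        show ?thesis
        proof (cases "w0 = []")
          case True
          then have yx': "y = x" using yx by simp
          have fr0: "({(l,x)},(l,x)) \<in> G" using freshD[OF frG _ _ lR] xG unfolding obpos_def by blast
          have "(subt l [i], x @ [i]) \<in> reduce ar {(l,x)} f x"
            using nvi nvar i True unfolding reduce_def by auto
          moreover then have "reduce ar {(l,x)} f x \<noteq> {}" by blast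
          moreover have "\<exists>l' ts. (l', x) \<in> {(l,x)} \<and> l' = Fun f ts" using lw0 True by simp
          ultimately have "(reduce ar {(l,x)} f x, (l,x)) \<in> D" "(subt l [i], z) \<in> reduce ar {(l,x)} f x"
            using fr0 i(3) unfolding D_def dabs_def by blast+
          then show ?thesis using yx' by blast
        next
          case False
          have "\<exists>MO. (MO,(l,y)) \<in> G \<and> (\<exists>l'. (l',x) \<in> MO)"
            using vinv_comp[OF vi xG[unfolded G_def] lR yx[symmetric] False nvw0 consh] unfolding G_def by blast
          then obtain MO lx where g: "(MO,(l,y)) \<in> G" "(lx,x) \<in> MO" by blast
          have lxe: "subt l w0 = lx" using wfgoals_uniq[OF wfG g yx[symmetric]] by simp
          have "(subt lx [i], x @ [i]) \<in> reduce ar MO f x"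
            using nvi nvar i g(2) lxe unfolding reduce_def by blast
          moreover then have "reduce ar MO f x \<noteq> {}" by blast
          moreover have "\<exists>l' ts. (l', x) \<in> MO \<and> l' = Fun f ts" using lw0 lxe g(2) by blast
          ultimately have "(reduce ar MO f x, (l,y)) \<in> D" "(subt lx [i], z) \<in> reduce ar MO f x"
            using g(1) i(3) unfolding D_def dabs_def by blast+
          then show ?thesis by blast
        qed
      qed
    qed
    then obtain MO l' where gD: "(MO,(l,y)) \<in> D" "(l',z) \<in> MO" by blast
    have "(MO,(l,y)) \<in> G'" using clos[OF gz(1) gD(1)] gz(2) gD(2) by simp
    then show "\<exists>MO. (MO,(l,y)) \<in> G' \<and> (\<exists>l'. (l',z) \<in> MO)" using gD(2) by blast
  qed
  have P: "prec (s,p) (s', p @ p')"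
    unfolding prec_def fst_conv snd_conv
  proof (intro conjI ballI allI impI)
    fix z assume "z \<in> obpos (agoals s' (p @ p'))"
    then have "z \<in> obpos D" using obpos_mono[OF G'D] unfolding G'_def by blast
    from obpos_dabs[OF this[unfolded D_def]] show "\<exists>z'\<in>obpos (agoals s p). prefix z' z"
      using xG unfolding G_def by auto
  next
    fix MO l y assume "(MO, l, y) \<in> agoals s' (p @ p')"
    then have "(MO,(l,y)) \<in> D" using G'D unfolding G'_def by blast
    from ann_dabs[OF this[unfolded D_def]]
    show "(\<exists>MO'. (MO', l, y) \<in> agoals s p) \<or> (\<exists>z\<in>obpos (agoals s p). strict_prefix z y)"
    proof
      assume "\<exists>i. 1 \<le> i \<and> i \<le> ar f \<and> y = x @ [i]"
      then obtain i where "y = x @ [i]" by blast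
      then have "strict_prefix x y" by (simp add: strict_prefix_def)
      then show ?thesis using xG unfolding G_def by blast
    qed (simp add: G_def)
  qed
  have "vinv F ar R L t s' (p @ p') h'"
    unfolding vinv_def using rs' V3 V4 V5 V6 unfolding G'_def by blast
  then show ?thesis using P unfolding h'_def x_def by simp
qed

section \<open>Rewriting: preservation of vertex invariants\<close>

lemma strict_prefix_butlast: "strict_prefix q z \<Longrightarrow> prefix q (butlast z)"
proof -
  assume "strict_prefix q z"
  then obtain r where "z = q @ r" "r \<noteq> []" by (auto simp: strict_prefix_def prefix_def)
  then show ?thesis by (simp add: butlast_append prefix_def)
qed

lemma closed_prefix:
  assumes cl: "\<And>y. y \<in> h \<Longrightarrow> y \<noteq> [] \<Longrightarrow> butlast y \<in> h"
  shows "y \<in> h \<Longrightarrow> prefix q y \<Longrightarrow> q \<in> h"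
proof (induction "length y - length q" arbitrary: y)
  case 0
  then have "y = q" by (auto simp: prefix_def)
  then show ?case using 0 by simp
next
  case (Suc n)
  then have "y \<noteq> q" by auto
  then have sp: "strict_prefix q y" using Suc.prems(2) by (simp add: strict_prefix_def)
  then have "y \<noteq> []" by auto
  then have "butlast y \<in> h" using cl Suc.prems(1) by blast
  moreover have "prefix q (butlast y)" using strict_prefix_butlast[OF sp] .
  moreover have "n = length (butlast y) - length q" using Suc.hyps(2) by simp
  ultimately show ?case using Suc.hyps(1) by blast
qed

lemma vinv_replace:
  assumes vi: "vinv F ar R L t s p h" and q: "in_poss q t" and nq: "\<forall>y\<in>h. \<not> prefix q y"
  shows "vinv F ar R L (replace_at t q u) s p h"
proof -
  define t' where "t' = replace_at t q u"
  have same: "in_poss y t' \<and> tsym (subt t' y) = tsym (subt t y)" if "y \<in> h" for y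
    using replace_other[OF q, of y u] nq that vinv_h[OF vi that] unfolding t'_def by blast
  have V3: "\<forall>y\<in>h. in_poss y t' \<and> (y \<noteq> [] \<longrightarrow> butlast y \<in> h)"
    using same vinv_h[OF vi] by blast
  have V4: "\<forall>z\<in>obpos (agoals s p). z \<notin> h \<and> in_poss z t' \<and> (z \<noteq> [] \<longrightarrow> butlast z \<in> h)"
  proof
    fix z assume z: "z \<in> obpos (agoals s p)"
    note ob = vinv_ob[OF vi z]
    have "in_poss z t'"
    proof (cases "prefix q z")
      case True
      show ?thesis
      proof (cases "z = q")
        case True then show ?thesis using replace_in_poss_same[OF q] unfolding t'_def by simp
      next
        case False
        then have sp: "strict_prefix q z" using \<open>prefix q z\<close> by (simp add: strict_prefix_def)
        then have "z \<noteq> []" by auto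
        then have "butlast z \<in> h" using ob by blast
        moreover have "prefix q (butlast z)" using strict_prefix_butlast[OF sp] .
        ultimately show ?thesis using nq by blast
      qed
    next
      case False
      then show ?thesis using replace_other[OF q, of z u] ob unfolding t'_def by blast
    qed
    then show "z \<notin> h \<and> in_poss z t' \<and> (z \<noteq> [] \<longrightarrow> butlast z \<in> h)" using ob by blast
  qed
  have V5: "\<forall>MO l Y. (MO,(l,Y)) \<in> agoals s p \<longrightarrow> (\<forall>w. nonvar l w \<longrightarrow>
         (\<exists>l' z. (l',z) \<in> MO \<and> prefix z (Y @ w)) \<or> (Y @ w \<in> h \<and> tsym (subt t' (Y @ w)) = tsym (subt l w)))"
  proof (intro allI impI)
    fix MO l Y w assume "(MO,(l,Y)) \<in> agoals s p" "nonvar l w"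
    from vinv_cons[OF vi this]
    show "(\<exists>l' z. (l',z) \<in> MO \<and> prefix z (Y @ w)) \<or> (Y @ w \<in> h \<and> tsym (subt t' (Y @ w)) = tsym (subt l w))"
      using same by metis
  qed
  have V6: "\<forall>z\<in>obpos (agoals s p). \<forall>l\<in>lhss R. \<forall>y w. z = y @ w \<and> w \<noteq> [] \<and> nonvar l w
         \<and> (\<forall>w'. nonvar l w' \<and> y @ w' \<in> h \<longrightarrow> tsym (subt t' (y @ w')) = tsym (subt l w'))
         \<longrightarrow> (\<exists>MO. (MO,(l,y)) \<in> agoals s p \<and> (\<exists>l'. (l',z) \<in> MO))"
  proof (intro ballI allI impI, elim conjE)
    fix z l y w assume a: "z \<in> obpos (agoals s p)" "l \<in> lhss R" "z = y @ w" "w \<noteq> []" "nonvar l w"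
      "\<forall>w'. nonvar l w' \<and> y @ w' \<in> h \<longrightarrow> tsym (subt t' (y @ w')) = tsym (subt l w')"
    have "\<And>w'. nonvar l w' \<Longrightarrow> y @ w' \<in> h \<Longrightarrow> tsym (subt t (y @ w')) = tsym (subt l w')"
      using a(6) same by metis
    from vinv_comp[OF vi a(1-5) this] show "\<exists>MO. (MO,(l,y)) \<in> agoals s p \<and> (\<exists>l'. (l',z) \<in> MO)" .
  qed
  show ?thesis unfolding vinv_def t'_def[symmetric] using vinv_reach[OF vi] V3 V4 V5 V6 by blast
qed

section \<open>Tree invariant\<close>

definition TI :: "'f set \<Rightarrow> ('f \<Rightarrow> nat) \<Rightarrow> ('f,'v) rule set \<Rightarrow> (('f,'v) state \<Rightarrow> pos)
   \<Rightarrow> ('f,'v) term \<Rightarrow> ('f,'v) redex set \<Rightarrow> ('f,'v) ctree \<Rightarrow> bool" where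
  "TI F ar R L t reds ct \<longleftrightarrow> wf_term F ar t \<and> ground t
   \<and> (\<forall>a w. (a,w) \<in> paths ct \<longrightarrow> vinv F ar R L t (fst (root w)) (snd (root w)) (rd L ` set a))
   \<and> (\<forall>rx\<in>reds. \<exists>a s p cs. (a, Node s p cs) \<in> paths ct \<and> rx \<in> matches ar R L s p t)
   \<and> (\<forall>l y. l \<in> lhss R \<and> in_poss y t \<and> pm l t y \<longrightarrow>
        (\<forall>r. (l,r) \<in> R \<longrightarrow> ((l,r),y) \<in> reds)
      \<or> (\<exists>s p MO. (s,p) \<in> buds ct \<and> (MO,(l,y)) \<in> agoals s p)
      \<or> (\<exists>s p z. (s,p) \<in> buds ct \<and> z \<in> obpos (agoals s p) \<and> strict_prefix z y))
   \<and> (\<forall>c\<in>subtrees ct. \<forall>x\<in>nodes c \<union> buds c. prec (root c) x)"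

lemma TID:
  assumes "TI F ar R L t reds ct"
  shows TI_wf: "wf_term F ar t" and TI_ground: "ground t"
    and TI_v: "\<And>a w. (a,w) \<in> paths ct \<Longrightarrow> vinv F ar R L t (fst (root w)) (snd (root w)) (rd L ` set a)"
    and TI_reds: "\<And>rx. rx \<in> reds \<Longrightarrow> \<exists>a s p cs. (a, Node s p cs) \<in> paths ct \<and> rx \<in> matches ar R L s p t"
    and TI_comp: "\<And>l y. l \<in> lhss R \<Longrightarrow> in_poss y t \<Longrightarrow> pm l t y \<Longrightarrow>
        (\<forall>r. (l,r) \<in> R \<longrightarrow> ((l,r),y) \<in> reds)
      \<or> (\<exists>s p MO. (s,p) \<in> buds ct \<and> (MO,(l,y)) \<in> agoals s p)
      \<or> (\<exists>s p z. (s,p) \<in> buds ct \<and> z \<in> obpos (agoals s p) \<and> strict_prefix z y)"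
    and TI_prec: "\<And>c x. c \<in> subtrees ct \<Longrightarrow> x \<in> nodes c \<union> buds c \<Longrightarrow> prec (root c) x"
  using assms unfolding TI_def by blast+

lemma agoals_s0: "agoals (s0 R) [] = s0 R" by simp

lemma TI_init:
  assumes c: "ctx F ar R L" and wf: "wf_term F ar t" and gr: "ground t"
  shows "TI F ar R L t {} (Bud (s0 R) [])"
proof -
  have ob: "obpos (s0 R) \<subseteq> {[]}" unfolding obpos_def s0_mem by auto
  have vi: "vinv F ar R L t (s0 R) [] {}"
    unfolding vinv_def agoals_s0
  proof (intro conjI)
    show "s0 R \<in> reach F ar R L" by (rule reach.init)
    show "\<forall>z\<in>obpos (s0 R). z \<notin> {} \<and> in_poss z t \<and> (z \<noteq> [] \<longrightarrow> butlast z \<in> {})"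
      using ob by auto
    show "\<forall>MO l Y. (MO, l, Y) \<in> s0 R \<longrightarrow> (\<forall>w. nonvar l w \<longrightarrow>
        (\<exists>l' z. (l', z) \<in> MO \<and> prefix z (Y @ w)) \<or> Y @ w \<in> {} \<and> tsym (subt t (Y @ w)) = tsym (subt l w))"
      unfolding s0_mem by auto
    show "\<forall>z\<in>obpos (s0 R). \<forall>l\<in>lhss R. \<forall>y w. z = y @ w \<and> w \<noteq> [] \<and> nonvar l w \<and>
        (\<forall>w'. nonvar l w' \<and> y @ w' \<in> {} \<longrightarrow> tsym (subt t (y @ w')) = tsym (subt l w')) \<longrightarrow>
        (\<exists>MO. (MO, l, y) \<in> s0 R \<and> (\<exists>l'. (l', z) \<in> MO))"
      using ob by auto
  qed simp
  show ?thesis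
    unfolding TI_def
  proof (intro conjI allI impI ballI)
    fix a w assume "(a, w) \<in> paths (Bud (s0 R) [])"
    then show "vinv F ar R L t (fst (root w)) (snd (root w)) (rd L ` set a)" using vi by simp
  next
    fix l y assume a: "l \<in> lhss R \<and> in_poss y t \<and> pm l t y"
    have g: "({(l,[])},(l,[])) \<in> s0 R" using a unfolding s0_mem by blast
    show "(\<forall>r. (l,r) \<in> R \<longrightarrow> ((l,r),y) \<in> {})
      \<or> (\<exists>s p MO. (s,p) \<in> buds (Bud (s0 R) []) \<and> (MO,(l,y)) \<in> agoals s p)
      \<or> (\<exists>s p z. (s,p) \<in> buds (Bud (s0 R) []) \<and> z \<in> obpos (agoals s p) \<and> strict_prefix z y)"
    proof (cases "y = []")
      case True
      then show ?thesis using g by auto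
    next
      case False
      have "[] \<in> obpos (s0 R)" using g unfolding obpos_def by blast
      moreover have "strict_prefix [] y" using False by (simp add: strict_prefix_def)
      ultimately show ?thesis by auto
    qed
  next
    fix c x assume "c \<in> subtrees (Bud (s0 R) [])" "x \<in> nodes c \<union> buds c"
    then show "prec (root c) x" using prec_refl by auto
  qed (use wf gr in auto)
qed

lemma TI_final:
  assumes "TI F ar R L t {} ct" "buds ct = {}" "ctx F ar R L"
  shows "NF R t"
  unfolding NF_def
proof
  assume "\<exists>l r p \<sigma>. (l, r) \<in> R \<and> in_poss p t \<and> subt t p = subst \<sigma> l"
  then obtain l r p \<sigma> where a: "(l, r) \<in> R" "in_poss p t" "subt t p = subst \<sigma> l" by blast
  have "pm l t p" using subst_pm[OF a(2,3)] .
  moreover have "l \<in> lhss R" using a(1) by (force simp: lhss_def)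
  ultimately show False using TI_comp[OF assms(1) _ a(2)] assms(2) a(1) by blast
qed

lemma rd_map_grow: "rd L ` (grow_rep new s p ` A) = rd L ` A"
  by (auto simp: image_image rd_grow)

lemma TI_grow:
  assumes c: "ctx F ar R L" and ti: "TI F ar R L t reds ct" and b: "(s,p) \<in> buds ct"
  shows "TI F ar R L t (reds \<union> matches ar R L s p t) (grow ar R L ct s p t)"
proof -
  define x where "x = p @ L s"
  define f where "f = hd_sym (subt t x)"
  define NEW where "NEW = {Bud s' (p @ p') | s' p'. (s',p') \<in> delta ar R L s f}"
  define new where "new = Abs_fset NEW"
  define g where "g = grow_rep new s p"
  define G where "G = agoals s p"
  define D where "D = dabs ar R G f x"
  have wft: "wf_term F ar t" and gr: "ground t" using TI_wf[OF ti] TI_ground[OF ti] .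
  obtain a where pa: "(a, Bud s p) \<in> paths ct" using b paths_bud by blast
  have vi: "vinv F ar R L t s p (rd L ` set a)" using TI_v[OF ti pa] by simp
  have rs: "s \<in> reach F ar R L" using vinv_reach[OF vi] .
  have SIs: "SI R s" using ctx_SI[OF c rs] .
  have fin: "finite R" and lf: "lhs_fun R" using ctx_finite[OF c] ctx_lhs_fun[OF c] by auto
  have wfG: "wfgoals R G" and frG: "fresh R G" using SIs SI_agoals[of R s p] unfolding G_def SI_def by auto
  have xG: "x \<in> obpos G" unfolding x_def G_def using ctx_label[OF c rs] .
  have xin: "in_poss x t" using vinv_ob[OF vi] xG unfolding G_def by blast
  have "tsym (subt t x) \<noteq> None" using ground_subt_Fun[OF gr xin] .
  then obtain us where tx: "subt t x = Fun f us" unfolding f_def by (cases "subt t x") auto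
  have symx: "tsym (subt t x) = Some f" using tx by simp
  have "NEW = (\<lambda>(s',p'). Bud s' (p @ p')) ` delta ar R L s f" unfolding NEW_def by auto
  then have "finite NEW" using finite_delta[OF SIs fin lf, of ar L f] by simp
  then have fnew: "fset new = NEW" unfolding new_def by (simp add: Abs_fset_inverse)
  have nb: "\<forall>b\<in>fset new. \<not> isNode b" unfolding fnew NEW_def by auto
  have gdef: "grow ar R L ct s p t = g ct" unfolding grow_def g_def new_def NEW_def f_def x_def by simp
  have childv: "vinv F ar R L t s' (p @ p') (insert x h0) \<and> prec (s,p) (s', p @ p')"
    if "vinv F ar R L t s p h0" "(s',p') \<in> delta ar R L s f" for s' p' h0
    using vinv_child[OF c wft gr that(1)] that(2) unfolding f_def x_def by blast
  have tochild: "\<exists>s' p'. (s',p') \<in> buds (g ct) \<and> gg \<in> agoals s' p'" if "gg \<in> D" for gg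
  proof -
    have "gg \<in> dabs ar R (agoals s p) f (p @ L s)" using that unfolding D_def G_def x_def .
    from child_exists[where L=L and p=p, OF SIs fin lf this] obtain s' p' where sp: "(s',p') \<in> delta ar R L s f" "gg \<in> agoals s' (p @ p')"
      by blast
    have "Bud s' (p @ p') \<in> fset new" unfolding fnew NEW_def using sp(1) by blast
    then have "buds (Bud s' (p @ p')) \<subseteq> buds (g ct)" unfolding g_def using grow_buds_new[OF b] by blast
    then show ?thesis using sp(2) by auto
  qed
  have P: "\<forall>a' w'. (a',w') \<in> paths (g ct) \<longrightarrow> vinv F ar R L t (fst (root w')) (snd (root w')) (rd L ` set a')"
  proof (intro allI impI)
    fix a' w' assume "(a',w') \<in> paths (g ct)"
    from paths_grow2[OF this[unfolded g_def] nb]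
    show "vinv F ar R L t (fst (root w')) (snd (root w')) (rd L ` set a')"
    proof (elim disjE exE conjE)
      fix a0 w0 assume h: "(a0, w0) \<in> paths ct" "a' = map (grow_rep new s p) a0" "w' = grow_rep new s p w0"
      show ?thesis using TI_v[OF ti h(1)] h(2,3) by (simp add: grow_root rd_map_grow)
    next
      fix a0 assume h: "(a0, Bud s p) \<in> paths ct" "w' \<in> fset new" "a' = map (grow_rep new s p) a0 @ [Node s p new]"
      have v0: "vinv F ar R L t s p (rd L ` set a0)" using TI_v[OF ti h(1)] by simp
      from h(2) obtain s' p' where w': "w' = Bud s' (p @ p')" "(s',p') \<in> delta ar R L s f" unfolding fnew NEW_def by blast
      have "rd L ` set a' = rd L ` (grow_rep new s p ` set a0) \<union> {rd L (Node s p new)}" using h(3) by auto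
      also have "\<dots> = insert x (rd L ` set a0)" unfolding rd_map_grow x_def by (simp add: rd_def)
      finally have "rd L ` set a' = insert x (rd L ` set a0)" .
      then show ?thesis using childv[OF v0 w'(2)] w'(1) by simp
    qed
  qed
  have Rd: "\<forall>rx\<in>reds \<union> matches ar R L s p t. \<exists>a s1 p1 cs. (a, Node s1 p1 cs) \<in> paths (g ct) \<and> rx \<in> matches ar R L s1 p1 t"
  proof
    fix rx assume "rx \<in> reds \<union> matches ar R L s p t"
    then show "\<exists>a s1 p1 cs. (a, Node s1 p1 cs) \<in> paths (g ct) \<and> rx \<in> matches ar R L s1 p1 t"
    proof
      assume "rx \<in> reds"
      from TI_reds[OF ti this] obtain a0 s1 p1 cs where h: "(a0, Node s1 p1 cs) \<in> paths ct" "rx \<in> matches ar R L s1 p1 t"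
        by blast
      from paths_grow1[OF h(1), of new s p] h(2) show ?thesis unfolding g_def by force
    next
      assume "rx \<in> matches ar R L s p t"
      from paths_grow1[OF pa, of new s p] this show ?thesis unfolding g_def by force
    qed
  qed
  have Cm: "\<forall>l y. l \<in> lhss R \<and> in_poss y t \<and> pm l t y \<longrightarrow>
        (\<forall>r. (l,r) \<in> R \<longrightarrow> ((l,r),y) \<in> reds \<union> matches ar R L s p t)
      \<or> (\<exists>s p MO. (s,p) \<in> buds (g ct) \<and> (MO,(l,y)) \<in> agoals s p)
      \<or> (\<exists>s p z. (s,p) \<in> buds (g ct) \<and> z \<in> obpos (agoals s p) \<and> strict_prefix z y)"
  proof (intro allI impI, elim conjE)
    fix l y assume lR: "l \<in> lhss R" and yin: "in_poss y t" and pmy: "pm l t y"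
    from TI_comp[OF ti lR yin pmy]
    show "(\<forall>r. (l,r) \<in> R \<longrightarrow> ((l,r),y) \<in> reds \<union> matches ar R L s p t)
      \<or> (\<exists>s p MO. (s,p) \<in> buds (g ct) \<and> (MO,(l,y)) \<in> agoals s p)
      \<or> (\<exists>s p z. (s,p) \<in> buds (g ct) \<and> z \<in> obpos (agoals s p) \<and> strict_prefix z y)"
    proof (elim disjE exE conjE)
      assume "\<forall>r. (l, r) \<in> R \<longrightarrow> ((l, r), y) \<in> reds"
      then show ?thesis by blast
    next
      fix s1 p1 MO assume h: "(s1, p1) \<in> buds ct" "(MO, l, y) \<in> agoals s1 p1"
      show ?thesis
      proof (cases "(s1,p1) = (s,p)")
        case False
        then have "(s1,p1) \<in> buds (g ct)" using grow_buds_keep[OF h(1)] unfolding g_def by blast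
        then show ?thesis using h(2) by blast
      next
        case True
        then have gG: "(MO,(l,y)) \<in> G" using h(2) unfolding G_def by simp
        show ?thesis
        proof (cases "x \<in> snd ` MO")
          case False
          then have "(MO,(l,y)) \<in> D" using gG unfolding D_def dabs_def by (intro UnI1 UnI2) simp
          from tochild[OF this] show ?thesis by blast
        next
          case True
          then obtain lx where lx: "(lx, x) \<in> MO" by force
          obtain wx where wx: "x = y @ wx" using wfG gG lx unfolding wfgoals_def by blast
          have lxe: "nonvar l wx \<and> subt l wx = lx" using wfgoals_uniq[OF wfG gG lx wx] .
          have "tsym (subt t x) = tsym lx" using pmy lxe wx unfolding pm_def by blast
          then obtain ts where lxf: "lx = Fun f ts" using symx by (cases lx) auto
          show ?thesis
          proof (cases "reduce ar MO f x = {}")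
            case False
            then have "(reduce ar MO f x, (l,y)) \<in> D" using gG lx lxf unfolding D_def dabs_def by blast
            from tochild[OF this] show ?thesis by blast
          next
            case True
            have MOe: "MO = {(lx, x)}"
            proof (rule set_eqI)
              fix e
              show "e \<in> MO \<longleftrightarrow> e \<in> {(lx, x)}"
              proof (cases e)
                case (Pair l2 z)
                show ?thesis
                proof
                  assume "e \<in> MO"
                  then have e: "(l2,z) \<in> MO" using Pair by simp
                  have "z = x"
                  proof (rule ccontr)
                    assume "z \<noteq> x"
                    then have "(l2,z) \<in> reduce ar MO f x" using e unfolding reduce_def by blast
                    then show False using True by blast
                  qed
                  then have "subt l wx = l2" using wfgoals_uniq[OF wfG gG e] wx by simp
                  then show "e \<in> {(lx, x)}" using Pair lxe \<open>z = x\<close> by simp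
                qed (use lx Pair in simp)
              qed
            qed
            have "in_poss wx l" using lxe by (simp add: nonvar_def)
            then have wflx: "wf_term F ar lx" using wf_subt[OF ctx_lhs_wf[OF c lR]] lxe by metis
            then have lents: "length ts = ar f" using lxf by simp
            have tsv: "\<forall>u\<in>set ts. \<exists>v. u = Var v"
            proof
              fix u assume "u \<in> set ts"
              then obtain j where j: "j < length ts" "ts ! j = u" by (auto simp: in_set_conv_nth)
              show "\<exists>v. u = Var v"
              proof (rule ccontr)
                assume nv: "\<nexists>v. u = Var v"
                have "in_poss [Suc j] lx" "subt lx [Suc j] = u" using j lxf by auto
                then have "(subt lx [Suc j], x @ [Suc j]) \<in> reduce ar MO f x"
                  using lx nv j lents unfolding reduce_def by auto
                then show False using True by blast
              qed
            qed
            obtain mo a0 where m: "(mo,(l,a0)) \<in> s" "MO = shm p mo" "y = p @ a0"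
              using gG unfolding G_def agoals_mem by blast
            have "shm p mo = shm p {(Fun f ts, L s)}" using m(2) MOe lxf unfolding x_def by simp
            then have moe: "mo = {(Fun f ts, L s)}" by (rule shm_inj)
            have "((l,r),y) \<in> matches ar R L s p t" if "(l,r) \<in> R" for r
            proof -
              have "((l,r),a0) \<in> out ar R L s f"
                unfolding out_def using that lents tsv m(1) moe by blast
              then show ?thesis unfolding matches_def f_def x_def using m(3) by blast
            qed
            then show ?thesis by blast
          qed
        qed
      qed
    next
      fix s1 p1 z assume h: "(s1, p1) \<in> buds ct" "z \<in> obpos (agoals s1 p1)" "strict_prefix z y"
      show ?thesis
      proof (cases "(s1,p1) = (s,p)")
        case False
        then have "(s1,p1) \<in> buds (g ct)" using grow_buds_keep[OF h(1)] unfolding g_def by blast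
        then show ?thesis using h(2,3) by blast
      next
        case True
        then have zG: "z \<in> obpos G" using h(2) unfolding G_def by simp
        then obtain MOz maz lz where "(MOz,maz) \<in> G" "(lz,z) \<in> MOz" unfolding obpos_def by blast
        then have frz: "({(l,z)},(l,z)) \<in> G" using freshD[OF frG _ _ lR] by blast
        show ?thesis
        proof (cases "z = x")
          case False
          then have "({(l,z)},(l,z)) \<in> D" using frz unfolding D_def dabs_def by (intro UnI1 UnI2) simp
          from tochild[OF this] obtain s' p' where "(s',p') \<in> buds (g ct)" "({(l,z)},(l,z)) \<in> agoals s' p'" by blast
          moreover then have "z \<in> obpos (agoals s' p')" using obposI by force
          ultimately show ?thesis using h(3) by blast
        next
          case True
          obtain i rest where y: "y = x @ i # rest" using h(3) True
            by (auto simp: strict_prefix_def prefix_def) (metis list.exhaust append_Nil2)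
          have "in_poss (x @ [i]) t" using in_poss_prefix[OF yin] y by (simp add: prefix_def)
          then have i: "1 \<le> i" "i \<le> ar f" using in_poss_child_bound[OF wft _ symx] by blast+
          then have "({(l, x @ [i])},(l, x @ [i])) \<in> D" using lR unfolding D_def dabs_def by blast
          from tochild[OF this] obtain s' p' where sp: "(s',p') \<in> buds (g ct)" "({(l, x @ [i])},(l, x @ [i])) \<in> agoals s' p'" by blast
          show ?thesis
          proof (cases rest)
            case Nil
            then show ?thesis using sp y by auto
          next
            case (Cons j rest')
            have "x @ [i] \<in> obpos (agoals s' p')" using obposI[OF sp(2)] by blast
            moreover have "strict_prefix (x @ [i]) y" using y Cons by (simp add: strict_prefix_def)
            ultimately show ?thesis using sp(1) by blast
          qed
        qed
      qed
    qed
  qed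
  have Pr: "\<forall>c'\<in>subtrees (g ct). \<forall>xx\<in>nodes c' \<union> buds c'. prec (root c') xx"
  proof (intro ballI)
    fix c' xx assume c': "c' \<in> subtrees (g ct)" and xx: "xx \<in> nodes c' \<union> buds c'"
    from grow_subtrees[OF c'[unfolded g_def]] show "prec (root c') xx"
    proof
      assume "\<exists>c0\<in>subtrees ct. c' = grow_rep new s p c0"
      then obtain c0 where c0: "c0 \<in> subtrees ct" "c' = grow_rep new s p c0" by blast
      from grow_nodes_buds[OF xx[unfolded c0(2)]] show ?thesis
      proof
        assume "xx \<in> nodes c0 \<union> buds c0"
        then show ?thesis using TI_prec[OF ti c0(1)] c0(2) by (simp add: grow_root)
      next
        assume h: "(s,p) \<in> buds c0 \<and> (\<exists>b\<in>fset new. xx \<in> nodes b \<union> buds b)"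
        then obtain bb where bb: "bb \<in> fset new" "xx \<in> nodes bb \<union> buds bb" by blast
        from bb(1) obtain s' p' where sp: "bb = Bud s' (p @ p')" "(s',p') \<in> delta ar R L s f" unfolding fnew NEW_def by blast
        then have xxe: "xx = (s', p @ p')" using bb(2) by simp
        have "prec (root c0) (s,p)" using TI_prec[OF ti c0(1)] h by blast
        moreover have "prec (s,p) (s', p @ p')" using childv[OF vi sp(2)] by blast
        ultimately show ?thesis using c0(2) xxe prec_trans by (simp add: grow_root) blast
      qed
    next
      assume "c' \<in> (\<Union>b\<in>fset new. subtrees b) \<and> (s,p) \<in> buds ct"
      then obtain bb where bb: "bb \<in> fset new" "c' \<in> subtrees bb" by blast
      then obtain s' p' where "bb = Bud s' (p @ p')" unfolding fnew NEW_def by blast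
      then show ?thesis using bb(2) xx prec_refl by auto
    qed
  qed
  show ?thesis unfolding gdef TI_def using wft gr P Rd Cm Pr by blast
qed

lemma hd_sym_eq: "tsym u = tsym v \<Longrightarrow> tsym u \<noteq> None \<Longrightarrow> hd_sym u = hd_sym v"
  by (cases u; cases v) auto

lemma prefix_append_split: "prefix q (y @ w) \<Longrightarrow> \<not> prefix q y \<Longrightarrow> \<exists>w1. q = y @ w1 \<and> prefix w1 w"
  by (auto simp: prefix_append)

lemma reported_redex:
  assumes c: "ctx F ar R L" and gr: "ground t" and vi: "vinv F ar R L t s p h"
    and g: "({(Fun f xs, x)}, (l, q)) \<in> agoals s p" and x: "x = p @ L s" and f: "f = hd_sym (subt t x)"
    and xs: "\<forall>u\<in>set xs. \<exists>v. u = Var v"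
  shows "pm l t q \<and> in_poss q t \<and> (x = q \<or> q \<in> h)"
proof -
  have rs: "s \<in> reach F ar R L" using vinv_reach[OF vi] .
  have wfG: "wfgoals R (agoals s p)" using ctx_SI[OF c rs] SI_agoals[of R s p] unfolding SI_def by simp
  have xG: "x \<in> obpos (agoals s p)" using obposI[OF g] by blast
  have xin: "in_poss x t" using vinv_ob[OF vi xG] by blast
  have "tsym (subt t x) \<noteq> None" using ground_subt_Fun[OF gr xin] .
  then have symx: "tsym (subt t x) = Some f" unfolding f by (cases "subt t x") auto
  obtain wx where wx: "x = q @ wx" using wfG g unfolding wfgoals_def by blast
  have lwx: "nonvar l wx \<and> subt l wx = Fun f xs" using wfgoals_uniq[OF wfG g _ wx] by blast
  have main: "in_poss (q @ w) t \<and> tsym (subt t (q @ w)) = tsym (subt l w) \<and> (w = [] \<longrightarrow> x = q \<or> q \<in> h)"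
    if nv: "nonvar l w" for w
  proof -
    from vinv_cons[OF vi g nv] show ?thesis
    proof
      assume "\<exists>l' z. (l', z) \<in> {(Fun f xs, x)} \<and> prefix z (q @ w)"
      then have px: "prefix x (q @ w)" by auto
      then obtain rr where w: "w = wx @ rr" using wx by (auto simp: prefix_def)
      show ?thesis
      proof (cases rr)
        case Nil
        then have "q @ w = x" using w wx by simp
        moreover have "w = wx" using w Nil by simp
        ultimately show ?thesis using xin symx lwx wx by auto
      next
        case (Cons i rr')
        have "nonvar l (wx @ [i])" using nonvar_prefix[OF nv] w Cons by simp
        then have "in_poss [i] (Fun f xs)" "tsym (subt (Fun f xs) [i]) \<noteq> None"
          using lwx by (auto simp: nonvar_def in_poss_append subt_append)
        then have "xs ! (i - 1) \<in> set xs" "tsym (xs ! (i - 1)) \<noteq> None" by auto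
        then show ?thesis using xs by fastforce
      qed
    next
      assume "q @ w \<in> h \<and> tsym (subt t (q @ w)) = tsym (subt l w)"
      then show ?thesis using vinv_h[OF vi] by auto
    qed
  qed
  have "l \<in> lhss R" using wfG g unfolding wfgoals_def by blast
  then have nv0: "nonvar l []" using ctx_lhs_fun[OF c] by (simp add: lhs_fun_def nonvar_def)
  have "pm l t q" unfolding pm_def using main by blast
  moreover have "in_poss q t" "x = q \<or> q \<in> h" using main[OF nv0] by auto
  ultimately show ?thesis by blast
qed

lemma TI_red:
  assumes c: "ctx F ar R L" and ti: "TI F ar R L t reds ct" and rx: "(rl,q) \<in> reds"
  shows "(t, rewrite_at t rl q) \<in> rstep R \<and>
    TI F ar R L (rewrite_at t rl q) (reds - \<Union>{matches ar R L s q' t | s q'. (s,q') \<in> nodes_at L ct q}) (prune L q ct)"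
proof -
  define t' where "t' = rewrite_at t rl q"
  define removed where "removed = \<Union>{matches ar R L s q' t | s q'. (s,q') \<in> nodes_at L ct q}"
  define ct' where "ct' = prune L q ct"
  have wft: "wf_term F ar t" and gr: "ground t" using TI_wf[OF ti] TI_ground[OF ti] .
  from TI_reds[OF ti rx] obtain aN sN pN csN where
    pN: "(aN, Node sN pN csN) \<in> paths ct" and mN: "(rl,q) \<in> matches ar R L sN pN t" by blast
  define xN where "xN = pN @ L sN"
  define fN where "fN = hd_sym (subt t xN)"
  from mN obtain q0 where q0: "q = pN @ q0" "(rl, q0) \<in> out ar R L sN fN"
    unfolding matches_def fN_def xN_def by blast
  then obtain l r xs where lr: "rl = (l,r)" "(l,r) \<in> R" "length xs = ar fN" "\<forall>u\<in>set xs. \<exists>v. u = Var v"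
    "({(Fun fN xs, L sN)}, (l, q0)) \<in> sN"
    unfolding out_def by blast
  have viN: "vinv F ar R L t sN pN (rd L ` set aN)" using TI_v[OF ti pN] by simp
  have gN: "({(Fun fN xs, xN)}, (l, q)) \<in> agoals sN pN"
    using lr(5) q0(1) unfolding agoals_mem xN_def by (intro exI[of _ "{(Fun fN xs, L sN)}"] exI[of _ q0]) simp
  from reported_redex[OF c gr viN gN xN_def fN_def lr(4)]
  have pmq: "pm l t q" and qin: "in_poss q t" and rdq: "xN = q \<or> q \<in> rd L ` set aN" by blast+
  have rule: "wf_term F ar l \<and> wf_term F ar r \<and> vars r \<subseteq> vars l \<and> linear l" using ctx_rule[OF c lr(2)] .
  obtain \<sigma> where sg0: "subt t q = subst \<sigma> l" using pm_subst[of l F ar t q] rule wft pmq by blast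
  define \<sigma>' where "\<sigma>' = (SOME \<sigma>. subt t q = subst \<sigma> l)"
  have sig: "subt t q = subst \<sigma>' l" unfolding \<sigma>'_def by (rule someI[of _ \<sigma>]) (rule sg0)
  have t'def: "t' = replace_at t q (subst \<sigma>' r)" unfolding t'_def rewrite_at_def lr(1) \<sigma>'_def by simp
  have step: "(t, t') \<in> rstep R" unfolding rstep_def t'def using lr(2) qin sig by blast
  have wfq: "wf_term F ar (subst \<sigma>' l)" using wf_subt[OF wft qin] sig by simp
  have "wf_term F ar (subst \<sigma>' r)"
    using wf_subst[of F ar r \<sigma>'] rule wf_subst_var[OF wfq] by blast
  then have wft': "wf_term F ar t'" unfolding t'def using wf_replace[OF wft _ qin] by blast
  have "vars (subst \<sigma>' r) \<subseteq> vars (subst \<sigma>' l)" using rule by (auto simp: vars_subst)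
  also have "\<dots> = {}" using sig vars_subt[OF qin] gr unfolding ground_def by auto
  finally have gr': "ground t'" unfolding t'def ground_def using vars_replace[OF qin] gr unfolding ground_def by blast
  have "\<exists>u\<in>subtrees ct. readsq L q u"
    using rdq
  proof
    assume "xN = q"
    then have "readsq L q (Node sN pN csN)" unfolding xN_def by simp
    moreover have "Node sN pN csN \<in> subtrees ct" using paths_props[OF pN] by blast
    ultimately show ?thesis by blast
  next
    assume "q \<in> rd L ` set aN"
    then obtain u where u: "u \<in> set aN" "rd L u = q" by blast
    have "isNode u" "u \<in> subtrees ct" using paths_props[OF pN] u(1) by blast+
    then show ?thesis using u(2) readsq_rd by blast
  qed
  then obtain u0 where u0: "u0 \<in> subtrees ct" "readsq L q u0" by blast
  from prune_first_reader[OF u0] obtain c0 where c0: "c0 \<in> subtrees ct" "readsq L q c0" "root c0 \<in> buds ct'"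
    unfolding ct'_def by blast
  have hq: "\<forall>y\<in>rd L ` set a. \<not> prefix q y" if "(a,w) \<in> paths ct" "\<forall>u\<in>set a. \<not> readsq L q u" for a w
  proof (intro ballI notI)
    fix y assume y: "y \<in> rd L ` set a" "prefix q y"
    have vi: "vinv F ar R L t (fst (root w)) (snd (root w)) (rd L ` set a)" using TI_v[OF ti that(1)] .
    have "q \<in> rd L ` set a" using closed_prefix[OF _ y] vinv_h[OF vi] by blast
    then obtain u where "u \<in> set a" "rd L u = q" by blast
    moreover have "isNode u" using paths_props[OF that(1)] \<open>u \<in> set a\<close> by blast
    ultimately show False using that(2) readsq_rd by blast
  qed
  have P: "\<forall>a' w'. (a',w') \<in> paths ct' \<longrightarrow> vinv F ar R L t' (fst (root w')) (snd (root w')) (rd L ` set a')"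
  proof (intro allI impI)
    fix a' w' assume "(a',w') \<in> paths ct'"
    from paths_prune2[OF this[unfolded ct'_def]] obtain a w where
      aw: "(a, w) \<in> paths ct" "\<forall>u\<in>set a. \<not> readsq L q u" "a' = map (prune L q) a" "w' = prune L q w" by blast
    have vi: "vinv F ar R L t (fst (root w)) (snd (root w)) (rd L ` set a)" using TI_v[OF ti aw(1)] .
    have "rd L ` set a' = rd L ` set a" using aw(3) by (auto simp: image_image rd_prune)
    then show "vinv F ar R L t' (fst (root w')) (snd (root w')) (rd L ` set a')"
      using vinv_replace[OF vi qin hq[OF aw(1,2)]] aw(4) unfolding t'def by (simp add: prune_root)
  qed
  have Rd: "\<forall>rx\<in>reds - removed. \<exists>a s p cs. (a, Node s p cs) \<in> paths ct' \<and> rx \<in> matches ar R L s p t'"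
  proof
    fix rx assume rx: "rx \<in> reds - removed"
    from TI_reds[OF ti] rx obtain a1 s1 p1 cs1 where
      p1: "(a1, Node s1 p1 cs1) \<in> paths ct" and m1: "rx \<in> matches ar R L s1 p1 t" by blast
    have noread: "\<not> readsq L q u" if "u \<in> set a1 \<union> {Node s1 p1 cs1}" for u
    proof
      assume rq: "readsq L q u"
      have "u \<in> subtrees ct" "Node s1 p1 cs1 \<in> subtrees u" using paths_props[OF p1] that subtrees_self by auto
      then have "root (Node s1 p1 cs1) \<in> nodes_at L ct q" using nodes_at_intro rq by fastforce
      then have "rx \<in> removed" unfolding removed_def using m1 by auto
      then show False using rx by blast
    qed
    have pp: "(map (prune L q) a1, prune L q (Node s1 p1 cs1)) \<in> paths ct'"
      using paths_prune1[OF p1] noread unfolding ct'_def by blast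
    have nq: "p1 @ L s1 \<noteq> q" using noread[of "Node s1 p1 cs1"] by auto
    then have pe: "prune L q (Node s1 p1 cs1) = Node s1 p1 (fimage (prune L q) cs1)" by simp
    define x1 where "x1 = p1 @ L s1"
    have vi1: "vinv F ar R L t s1 p1 (rd L ` set a1)" using TI_v[OF ti p1] by simp
    have x1G: "x1 \<in> obpos (agoals s1 p1)" unfolding x1_def using ctx_label[OF c vinv_reach[OF vi1]] .
    note ob1 = vinv_ob[OF vi1 x1G]
    have "\<not> prefix q x1"
    proof
      assume pq: "prefix q x1"
      have "x1 \<noteq> q" using nq unfolding x1_def by simp
      then have sp: "strict_prefix q x1" using pq by (simp add: strict_prefix_def)
      then have "x1 \<noteq> []" by auto
      then have "butlast x1 \<in> rd L ` set a1" using ob1 by blast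
      moreover have "prefix q (butlast x1)" using strict_prefix_butlast[OF sp] .
      ultimately show False using hq[OF p1] noread by blast
    qed
    then have "tsym (subt t' x1) = tsym (subt t x1)" using replace_other[OF qin, of x1] ob1 unfolding t'def by blast
    moreover have "tsym (subt t x1) \<noteq> None" using ground_subt_Fun[OF gr] ob1 by blast
    ultimately have "hd_sym (subt t' x1) = hd_sym (subt t x1)" using hd_sym_eq by metis
    then have "matches ar R L s1 p1 t' = matches ar R L s1 p1 t" unfolding matches_def x1_def by simp
    then show "\<exists>a s p cs. (a, Node s p cs) \<in> paths ct' \<and> rx \<in> matches ar R L s p t'"
      using pp pe m1 by auto
  qed
  have lift: "(\<exists>s p MO. (s,p) \<in> buds ct' \<and> (MO,(l,y)) \<in> agoals s p)
      \<or> (\<exists>s p z. (s,p) \<in> buds ct' \<and> z \<in> obpos (agoals s p) \<and> strict_prefix z y)"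
    if "cc \<in> subtrees ct" "readsq L q cc" "xx \<in> nodes cc \<union> buds cc"
      "(\<exists>MO. (MO,(l,y)) \<in> agoals (fst xx) (snd xx)) \<or> (\<exists>z\<in>obpos (agoals (fst xx) (snd xx)). strict_prefix z y)"
    for cc xx l y
  proof -
    from prune_first_reader[OF that(1,2)] obtain c1 where
      c1: "c1 \<in> subtrees ct" "cc \<in> subtrees c1" "root c1 \<in> buds (prune L q ct)" by blast
    have "xx \<in> nodes c1 \<union> buds c1" using subtrees_nodes[OF c1(2)] that(3) by blast
    then have pr: "prec (root c1) xx" using TI_prec[OF ti c1(1)] by blast
    obtain s1 p1 where r1: "root c1 = (s1,p1)" by (cases "root c1")
    have b1: "(s1,p1) \<in> buds ct'" using c1(3) r1 unfolding ct'_def by simp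
    from that(4) show ?thesis
    proof
      assume "\<exists>MO. (MO,(l,y)) \<in> agoals (fst xx) (snd xx)"
      then obtain MO where "(MO,(l,y)) \<in> agoals (fst xx) (snd xx)" by blast
      then have "(\<exists>MO'. (MO',(l,y)) \<in> agoals s1 p1) \<or> (\<exists>z\<in>obpos (agoals s1 p1). strict_prefix z y)"
        using pr r1 unfolding prec_def by auto
      then show ?thesis using b1 by blast
    next
      assume "\<exists>z\<in>obpos (agoals (fst xx) (snd xx)). strict_prefix z y"
      then obtain z where z: "z \<in> obpos (agoals (fst xx) (snd xx))" "strict_prefix z y" by blast
      then obtain z' where "z' \<in> obpos (agoals s1 p1)" "prefix z' z" using pr r1 unfolding prec_def by auto
      then show ?thesis using b1 z(2) by (meson prefix_order.le_less_trans)
    qed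
  qed
  obtain sr pr where rc0: "root c0 = (sr, pr)" by (cases "root c0")
  have brd: "(sr, pr) \<in> buds ct'" using c0(3) rc0 by simp
  have prq: "pr @ L sr = q" using c0(2) rc0 by (cases c0) auto
  obtain ar' where par: "(ar', Bud sr pr) \<in> paths ct'" using brd paths_bud by blast
  have vr: "vinv F ar R L t' sr pr (rd L ` set ar')" using P par by fastforce
  have rsr: "sr \<in> reach F ar R L" using vinv_reach[OF vr] .
  have qG: "q \<in> obpos (agoals sr pr)" unfolding prq[symmetric] by (rule ctx_label[OF c rsr])
  have frr: "fresh R (agoals sr pr)" using ctx_SI[OF c rsr] SI_agoals[of R sr pr] unfolding SI_def by simp
  have Cm: "\<forall>l y. l \<in> lhss R \<and> in_poss y t' \<and> pm l t' y \<longrightarrow>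
        (\<forall>r. (l,r) \<in> R \<longrightarrow> ((l,r),y) \<in> reds - removed)
      \<or> (\<exists>s p MO. (s,p) \<in> buds ct' \<and> (MO,(l,y)) \<in> agoals s p)
      \<or> (\<exists>s p z. (s,p) \<in> buds ct' \<and> z \<in> obpos (agoals s p) \<and> strict_prefix z y)"
  proof (intro allI impI, elim conjE)
    fix l y assume lR: "l \<in> lhss R" and yin: "in_poss y t'" and pmy: "pm l t' y"
    show "(\<forall>r. (l,r) \<in> R \<longrightarrow> ((l,r),y) \<in> reds - removed)
      \<or> (\<exists>s p MO. (s,p) \<in> buds ct' \<and> (MO,(l,y)) \<in> agoals s p)
      \<or> (\<exists>s p z. (s,p) \<in> buds ct' \<and> z \<in> obpos (agoals s p) \<and> strict_prefix z y)"
    proof (cases "prefix q y")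
      case True
      have fq: "({(l,q)},(l,q)) \<in> agoals sr pr"
        using qG freshD[OF frr _ _ lR] unfolding obpos_def by blast
      show ?thesis
      proof (cases "y = q")
        case True
        then show ?thesis using fq brd by blast
      next
        case False
        then have "strict_prefix q y" using \<open>prefix q y\<close> by (simp add: strict_prefix_def)
        then show ?thesis using qG brd by blast
      qed
    next
      case npq: False
      show ?thesis
      proof (cases "\<exists>w. q = y @ w \<and> nonvar l w")
        case True
        then obtain w where w: "q = y @ w" "nonvar l w" by blast
        have "w \<noteq> []" using w npq by auto
        have cons: "\<And>w'. nonvar l w' \<Longrightarrow> y @ w' \<in> rd L ` set ar' \<Longrightarrow> tsym (subt t' (y @ w')) = tsym (subt l w')"
          using pmy unfolding pm_def by blast
        from vinv_comp[OF vr qG lR w(1) \<open>w \<noteq> []\<close> w(2) cons]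
        show ?thesis using brd by blast
      next
        case nov: False
        have tr: "\<not> prefix q (y @ w)" if "nonvar l w" for w
        proof
          assume "prefix q (y @ w)"
          from prefix_append_split[OF this npq] obtain w1 where "q = y @ w1" "prefix w1 w" by blast
          then show False using nov nonvar_prefix[OF that] by blast
        qed
        have yin0: "in_poss y t" using replace_other[OF qin npq, of "subst \<sigma>' r"] yin unfolding t'def by blast
        have pm0: "pm l t y"
          unfolding pm_def
        proof (intro allI impI)
          fix w assume nv: "nonvar l w"
          have "in_poss (y @ w) t' \<and> tsym (subt t' (y @ w)) = tsym (subt l w)" using pmy nv unfolding pm_def by blast
          then show "in_poss (y @ w) t \<and> tsym (subt t (y @ w)) = tsym (subt l w)"
            using replace_other[OF qin tr[OF nv], of "subst \<sigma>' r"] unfolding t'def by metis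
        qed
        from TI_comp[OF ti lR yin0 pm0] show ?thesis
        proof (elim disjE exE conjE)
          assume all: "\<forall>r. (l, r) \<in> R \<longrightarrow> ((l, r), y) \<in> reds"
          show ?thesis
          proof (cases "\<exists>r. (l,r) \<in> R \<and> ((l,r),y) \<in> removed")
            case False
            then show ?thesis using all by blast
          next
            case True
            then obtain r s2 q2 where rr: "(l,r) \<in> R" "(s2,q2) \<in> nodes_at L ct q" "((l,r),y) \<in> matches ar R L s2 q2 t"
              unfolding removed_def by blast
            from rr(2) obtain cc where cc: "cc \<in> subtrees ct" "snd (root cc) @ L (fst (root cc)) = q" "(s2,q2) \<in> nodes cc"
              unfolding nodes_at_def by blast
            have rcc: "readsq L q cc" using cc(2,3) by (cases cc) auto
            from rr(3) obtain a2 where a2: "y = q2 @ a2" "((l,r), a2) \<in> out ar R L s2 (hd_sym (subt t (q2 @ L s2)))"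
              unfolding matches_def by blast
            then obtain xs2 fx where "({(fx, L s2)}, (l, a2)) \<in> s2" unfolding out_def by blast
            then have "(shm q2 {(fx, L s2)}, (l, y)) \<in> agoals s2 q2" unfolding agoals_mem a2(1) by blast
            then have "\<exists>MO. (MO,(l,y)) \<in> agoals (fst (s2,q2)) (snd (s2,q2))" by auto
            from lift[OF cc(1) rcc _ disjI1[OF this]] cc(3) show ?thesis by blast
          qed
        next
          fix s1 p1 MO assume h: "(s1, p1) \<in> buds ct" "(MO, l, y) \<in> agoals s1 p1"
          from prune_buds[OF h(1), of L q] show ?thesis
          proof
            assume "(s1,p1) \<in> buds (prune L q ct)"
            then show ?thesis using h(2) unfolding ct'_def by blast
          next
            assume "\<exists>cc\<in>subtrees ct. readsq L q cc \<and> (s1, p1) \<in> buds cc"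
            then obtain cc where cc: "cc \<in> subtrees ct" "readsq L q cc" "(s1, p1) \<in> buds cc" by blast
            have "\<exists>MO. (MO,(l,y)) \<in> agoals (fst (s1,p1)) (snd (s1,p1))" using h(2) by auto
            from lift[OF cc(1,2) _ disjI1[OF this]] cc(3) show ?thesis by blast
          qed
        next
          fix s1 p1 z assume h: "(s1, p1) \<in> buds ct" "z \<in> obpos (agoals s1 p1)" "strict_prefix z y"
          from prune_buds[OF h(1), of L q] show ?thesis
          proof
            assume "(s1,p1) \<in> buds (prune L q ct)"
            then show ?thesis using h(2,3) unfolding ct'_def by blast
          next
            assume "\<exists>cc\<in>subtrees ct. readsq L q cc \<and> (s1, p1) \<in> buds cc"
            then obtain cc where cc: "cc \<in> subtrees ct" "readsq L q cc" "(s1, p1) \<in> buds cc" by blast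
            have "\<exists>z\<in>obpos (agoals (fst (s1,p1)) (snd (s1,p1))). strict_prefix z y" using h(2,3) by auto
            from lift[OF cc(1,2) _ disjI2[OF this]] cc(3) show ?thesis by blast
          qed
        qed
      qed
    qed
  qed
  have Pr: "\<forall>c'\<in>subtrees ct'. \<forall>xx\<in>nodes c' \<union> buds c'. prec (root c') xx"
  proof (intro ballI)
    fix c' xx assume c': "c' \<in> subtrees ct'" and xx: "xx \<in> nodes c' \<union> buds c'"
    from prune_subtrees[OF c'[unfolded ct'_def]] obtain cc where cc: "cc \<in> subtrees ct" "c' = prune L q cc" by blast
    have "xx \<in> nodes cc \<union> buds cc" using prune_nodes_buds xx cc(2) by blast
    then show "prec (root c') xx" using TI_prec[OF ti cc(1)] cc(2) by (simp add: prune_root)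
  qed
  have "TI F ar R L t' (reds - removed) ct'"
    unfolding TI_def using wft' gr' P Rd Cm Pr by blast
  then show ?thesis using step unfolding t'_def removed_def ct'_def by blast
qed

lemma run_correct:
  assumes "norm_run ar R L sel t reds ct t'" "TI F ar R L t reds ct" "ctx F ar R L" "strategy sel"
  shows "(t, t') \<in> (rstep R)\<^sup>* \<and> NF R t'"
  using assms
proof (induction rule: norm_run.induct)
  case (stop ct reds t)
  then show ?case using TI_final by blast
next
  case (conf ct reds s p t t')
  have "(s,p) \<in> buds ct" using conf.prems(3) conf.hyps(1,2) unfolding strategy_def
    by (metis sum.simps(5))
  from conf.IH[OF TI_grow[OF conf.prems(2) conf.prems(1) this] conf.prems(2,3)] show ?case .
next
  case (red ct reds rl p t t')
  have "(rl,p) \<in> reds" using red.prems(3) red.hyps(1,2) unfolding strategy_def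
    by (metis sum.simps(6))
  from TI_red[OF red.prems(2) red.prems(1) this]
  have "(t, rewrite_at t rl p) \<in> rstep R" and ti: "TI F ar R L (rewrite_at t rl p)
      (reds - \<Union>{matches ar R L s q' t | s q'. (s,q') \<in> nodes_at L ct p}) (prune L p ct)" by blast+
  with red.IH[OF ti red.prems(2,3)] show ?case by (meson converse_rtrancl_into_rtrancl)
qed

theorem corollary1:
  fixes F :: "'f set" and ar :: "'f \<Rightarrow> nat"
    and R :: "(('f,'v) term \<times> ('f,'v) term) set"
    and L :: "('f,'v) state \<Rightarrow> pos"
    and sel :: "('f,'v) selector"
    and t0 t :: "('f,'v) term"
  assumes "finite F"
    and "trs F ar R"
    and "left_linear R"
    and "valid_label F ar R L"
    and "wf_term F ar t0"
    and "ground t0"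
    and "strategy sel"
    and "normalize_returns ar R L sel t0 t"
  shows "(t0, t) \<in> (rstep R)\<^sup>* \<and> NF R t"
proof -
  have c: "ctx F ar R L" using assms(2-4) by (simp add: ctx_def)
  show ?thesis
    using run_correct[OF assms(8)[unfolded normalize_returns_def] TI_init[OF c assms(5,6)] c assms(7)] .
qed

end
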